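(* For $\ell=0,1,\ldots,N$ let $$\mathcal{K}_\ell(x,y)=\frac{\exp\big(\frac{\mu g\ell}{2\hbar}\big(\sum_{n=1}^{N-\ell}y_n-\sum_{m=1}^Nx_m\big)\big)}{\prod_{m=1}^N\prod_{n=1}^{N-\ell}[2\cosh(\mu(x_m-y_n)/2)]^{g/\hbar}},\qquad \mathcal{K}_N(x)=\exp\Big(-\frac{\mu gN}{2\hbar}\sum_{m=1}^Nx_m\Big).$$ Then for every $k\in\{1,\ldots,N\}$, $$:\hat\Sigma_k(L_{\rm nr}+E)(x_1,\ldots,x_N):\ \mathcal{K}_\ell(x,y)=\sum_{j=0}^{\min(k,\ell)}c_{\ell,j}\ :\hat\Sigma_{k-j}(L_{\rm nr}+E)(-y_1,\ldots,-y_{N-\ell}):\ \mathcal{K}_\ell(x,y),$$ where $:\hat\Sigma_m(L_{\rm nr}+E)(-y_1,\ldots,-y_{N-\ell}):\equiv0$ for $m>N-\ell$ and $:\hat\Sigma_0(L_{\rm nr}+E):\equiv1$.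
   Context: Fix $\hbar,\mu,g>0$. For $n$ variables $x=(x_1,\ldots,x_n)$ and momenta $p$, let $L_{\rm nr}(x,p)$ be the $n\times n$ matrix $L_{\rm nr}(x,p)_{jk}=\delta_{jk}p_j+(1-\delta_{jk})\frac{i\mu g}{2\sinh(\mu(x_j-x_k)/2)}$ and $E(x)=\mathrm{diag}(z_1(x),\ldots,z_n(x))$ with $z_j(x)=-\frac{i\mu g}{2}\sum_{k\ne j}\coth(\mu(x_j-x_k)/2)$. Let $\Sigma_k(M)$ denote the $k$-th symmetric function of a matrix $M$ (sum of its principal $k\times k$ minors). The normal-ordered operator $:\hat\Sigma_k(L_{\rm nr}+E)(x):$ is the partial differential operator obtained from the polynomial $\Sigma_k(L_{\rm nr}(x,p)+E(x))$ in $p$ by writing all $x$-dependent coefficients to the left of the monomials in $p$ and substituting $p_m\to-i\hbar\partial_{x_m}$. The operator $:\hat\Sigma_k(L_{\rm nr}+E)(-y_1,\ldots,-y_n):$ is obtained from the one in variables $x$ by the substitution $x=-y$ (coefficients evaluated at $-y$, $\partial_{x_m}$ replaced by $-\partial_{y_m}$). Coefficients: $c_{\ell,j}=(i\mu g/2)^jS_j(1,3,\ldots,2\ell-1)$ for $0\le j\le\ell$ (with $S_j$ the $j$-th elementary symmetric function of the $\ell$ numbers $1,3,\ldots,2\ell-1$, $c_{0,0}=1$). The identity is understood for real $x$, $y$ with pairwise distinct coordinates. *)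

theory Defs
  imports "HOL-Analysis.Analysis" "HOL-Combinatorics.Permutations"
begin

text \<open>Points in R^n are functions nat => real; only coordinates 1..n matter.\<close>

definition Lnr_offdiag :: "real \<Rightarrow> real \<Rightarrow> (nat \<Rightarrow> real) \<Rightarrow> nat \<Rightarrow> nat \<Rightarrow> complex" where
  "Lnr_offdiag mu g x j k =
     \<i> * complex_of_real mu * complex_of_real g / (2 * complex_of_real (sinh (mu * (x j - x k) / 2)))"

definition zE :: "real \<Rightarrow> real \<Rightarrow> nat \<Rightarrow> (nat \<Rightarrow> real) \<Rightarrow> nat \<Rightarrow> complex" where
  "zE mu g n x j =
     - (\<i> * complex_of_real mu * complex_of_real g / 2) *
       (\<Sum>k\<in>{1..n} - {j}. complex_of_real (cosh (mu * (x j - x k) / 2) / sinh (mu * (x j - x k) / 2)))"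

definition partial_at :: "((nat \<Rightarrow> real) \<Rightarrow> complex) \<Rightarrow> nat \<Rightarrow> (nat \<Rightarrow> real) \<Rightarrow> complex" where
  "partial_at f m = (\<lambda>x. vector_derivative (\<lambda>t. f (x(m := t))) (at (x m)))"

fun mpartial :: "((nat \<Rightarrow> real) \<Rightarrow> complex) \<Rightarrow> nat list \<Rightarrow> (nat \<Rightarrow> real) \<Rightarrow> complex" where
  "mpartial f [] = f"
| "mpartial f (m # ms) = partial_at (mpartial f ms) m"

text \<open>Normal-ordered operator :Sigma_k(L_nr + E): in n variables, applied to f at the point x.
  With s = 1 this is the operator in the variables x; with s = -1 it is the operator obtained
  by the substitution x = -y (coefficients at -y, each derivative replaced by its negative).
  Expansion: principal minors over I with |I| = k, Leibniz formula over permutations of I;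
  the diagonal factors (p_j + z_j) for fixed points are expanded, and the monomial
  prod_{j in J} p_j becomes (-i hbar)^|J| times the mixed partial derivative.\<close>
definition Sigma_op :: "real \<Rightarrow> real \<Rightarrow> real \<Rightarrow> nat \<Rightarrow> nat \<Rightarrow> real \<Rightarrow>
    ((nat \<Rightarrow> real) \<Rightarrow> complex) \<Rightarrow> (nat \<Rightarrow> real) \<Rightarrow> complex" where
  "Sigma_op hbar mu g n k s f x =
     (let xs = (\<lambda>m. s * x m) in
      \<Sum>I\<in>{I. I \<subseteq> {1..n} \<and> card I = k}.
        \<Sum>\<sigma>\<in>{\<sigma>. \<sigma> permutes I}.
          of_int (sign \<sigma>) *
          (\<Prod>j\<in>{j\<in>I. \<sigma> j \<noteq> j}. Lnr_offdiag mu g xs j (\<sigma> j)) *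
          (\<Sum>J\<in>Pow {j\<in>I. \<sigma> j = j}.
             (\<Prod>j\<in>{j\<in>I. \<sigma> j = j} - J. zE mu g n xs j) *
             (- \<i> * complex_of_real hbar * complex_of_real s) ^ card J *
             mpartial f (sorted_list_of_set J) x))"

definition coef_c :: "real \<Rightarrow> real \<Rightarrow> nat \<Rightarrow> nat \<Rightarrow> complex" where
  "coef_c mu g l j = (\<i> * complex_of_real mu * complex_of_real g / 2) ^ j *
     of_nat (\<Sum>A\<in>{A. A \<subseteq> {1..l} \<and> card A = j}. \<Prod>a\<in>A. 2 * a - 1)"

definition kernelK :: "real \<Rightarrow> real \<Rightarrow> real \<Rightarrow> nat \<Rightarrow> nat \<Rightarrow> (nat \<Rightarrow> real) \<Rightarrow> (nat \<Rightarrow> real) \<Rightarrow> complex" where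
  "kernelK hbar mu g N l x y = complex_of_real (
     exp (mu * g * real l / (2 * hbar) * ((\<Sum>n=1..N-l. y n) - (\<Sum>m=1..N. x m))) /
     (\<Prod>m=1..N. \<Prod>n=1..N-l. (2 * cosh (mu * (x m - y n) / 2)) powr (g / hbar)))"

end

theory Submission
  imports Defs "Jordan_Normal_Form.Determinant" "HOL-Computational_Algebra.Polynomial"
begin
definition pm :: "nat set \<Rightarrow> (nat \<Rightarrow> nat \<Rightarrow> 'a::comm_ring_1) \<Rightarrow> 'a" where
  "pm S A = (\<Sum>\<sigma>\<in>{\<sigma>. \<sigma> permutes S}. of_int (sign \<sigma>) * (\<Prod>i\<in>S. A i (\<sigma> i)))"

lemma permutes_fix_iff:
  assumes "I \<subseteq> S"
  shows "{\<sigma>. \<sigma> permutes S \<and> (\<forall>i\<in>S - I. \<sigma> i = i)} = {\<sigma>. \<sigma> permutes I}"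
proof (rule Set.set_eqI, unfold mem_Collect_eq, rule iffI)
  fix \<sigma> assume h: "\<sigma> permutes S \<and> (\<forall>i\<in>S - I. \<sigma> i = i)"
  show "\<sigma> permutes I" unfolding permutes_def
  proof (intro conjI allI impI)
    fix x assume "x \<notin> I"
    then show "\<sigma> x = x" using h permutes_not_in[of \<sigma> S x] by (cases "x \<in> S") auto
  next
    fix y show "\<exists>!x. \<sigma> x = y" using h unfolding permutes_def by blast
  qed
next
  fix \<sigma> assume h: "\<sigma> permutes I"
  then show "\<sigma> permutes S \<and> (\<forall>i\<in>S - I. \<sigma> i = i)"
    using permutes_subset[OF h assms] permutes_not_in[OF h] by auto
qed

lemma pm_expand:
  fixes A :: "nat \<Rightarrow> nat \<Rightarrow> 'a::comm_ring_1"
  assumes fin: "finite S"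
  shows "pm S (\<lambda>i j. (if i = j then 1 else 0) + t * A i j) = (\<Sum>I\<in>Pow S. t ^ card I * pm I A)"
proof -
  have "pm S (\<lambda>i j. (if i = j then 1 else 0) + t * A i j)
      = (\<Sum>\<sigma>\<in>{\<sigma>. \<sigma> permutes S}. of_int (sign \<sigma>) *
          (\<Sum>I\<in>Pow S. (\<Prod>i\<in>I. t * A i (\<sigma> i)) * (\<Prod>i\<in>S - I. (if i = \<sigma> i then 1 else 0))))"
    unfolding pm_def
    by (intro sum.cong refl, subst prod_add[OF fin, symmetric]) (simp add: add.commute)
  also have "\<dots> = (\<Sum>\<sigma>\<in>{\<sigma>. \<sigma> permutes S}. \<Sum>I\<in>Pow S.
        (if (\<forall>i\<in>S - I. \<sigma> i = i) then t ^ card I * (of_int (sign \<sigma>) * (\<Prod>i\<in>I. A i (\<sigma> i))) else 0))"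
  proof (intro sum.cong refl)
    fix \<sigma> show "of_int (sign \<sigma>) * (\<Sum>I\<in>Pow S. (\<Prod>i\<in>I. t * A i (\<sigma> i)) * (\<Prod>i\<in>S - I. (if i = \<sigma> i then 1 else 0)))
      = (\<Sum>I\<in>Pow S. (if (\<forall>i\<in>S - I. \<sigma> i = i) then t ^ card I * (of_int (sign \<sigma>) * (\<Prod>i\<in>I. A i (\<sigma> i))) else 0))"
      unfolding sum_distrib_left
    proof (intro sum.cong refl)
      fix I assume I: "I \<in> Pow S"
      have fI: "finite I" using I fin finite_subset by auto
      have "(\<Prod>i\<in>S - I. (if i = \<sigma> i then 1 else 0::'a)) = (if (\<forall>i\<in>S - I. \<sigma> i = i) then 1 else 0)"
      proof (cases "\<forall>i\<in>S - I. \<sigma> i = i")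
        case True then show ?thesis by (simp add: prod.neutral)
      next
        case False
        then obtain i where "i \<in> S - I" "\<sigma> i \<noteq> i" by blast
        then have "(\<Prod>i\<in>S - I. (if i = \<sigma> i then 1 else 0::'a)) = 0"
          using fin by (intro prod_zero) (auto intro!: bexI[of _ i])
        then show ?thesis using False by simp
      qed
      then show "of_int (sign \<sigma>) * ((\<Prod>i\<in>I. t * A i (\<sigma> i)) * (\<Prod>i\<in>S - I. (if i = \<sigma> i then 1 else 0)))
          = (if (\<forall>i\<in>S - I. \<sigma> i = i) then t ^ card I * (of_int (sign \<sigma>) * (\<Prod>i\<in>I. A i (\<sigma> i))) else 0)"
        using fI by (simp add: prod.distrib)
    qed
  qed
  also have "\<dots> = (\<Sum>I\<in>Pow S. \<Sum>\<sigma>\<in>{\<sigma>. \<sigma> permutes S}.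
        (if (\<forall>i\<in>S - I. \<sigma> i = i) then t ^ card I * (of_int (sign \<sigma>) * (\<Prod>i\<in>I. A i (\<sigma> i))) else 0))"
    by (rule sum.swap)
  also have "\<dots> = (\<Sum>I\<in>Pow S. t ^ card I * pm I A)"
  proof (intro sum.cong refl)
    fix I assume I: "I \<in> Pow S"
    have "(\<Sum>\<sigma>\<in>{\<sigma>. \<sigma> permutes S}.
        (if (\<forall>i\<in>S - I. \<sigma> i = i) then t ^ card I * (of_int (sign \<sigma>) * (\<Prod>i\<in>I. A i (\<sigma> i))) else 0))
        = (\<Sum>\<sigma>\<in>{\<sigma>\<in>{\<sigma>. \<sigma> permutes S}. (\<forall>i\<in>S - I. \<sigma> i = i)}. t ^ card I * (of_int (sign \<sigma>) * (\<Prod>i\<in>I. A i (\<sigma> i))))"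
      by (rule sum.inter_filter[symmetric]) (simp add: finite_permutations fin)
    also have "{\<sigma>\<in>{\<sigma>. \<sigma> permutes S}. (\<forall>i\<in>S - I. \<sigma> i = i)} = {\<sigma>. \<sigma> permutes I}"
      using permutes_fix_iff[of I S] I by auto
    finally show "(\<Sum>\<sigma>\<in>{\<sigma>. \<sigma> permutes S}.
        (if (\<forall>i\<in>S - I. \<sigma> i = i) then t ^ card I * (of_int (sign \<sigma>) * (\<Prod>i\<in>I. A i (\<sigma> i))) else 0))
        = t ^ card I * pm I A"
      unfolding pm_def sum_distrib_left .
  qed
  finally show ?thesis .
qed

lemma pm_scale:
  fixes A :: "nat \<Rightarrow> nat \<Rightarrow> 'a::comm_ring_1"
  shows "pm S (\<lambda>i j. c * A i j) = c ^ card S * pm S A"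
proof (cases "finite S")
  case True
  then show ?thesis unfolding pm_def sum_distrib_left
    by (intro sum.cong refl) (simp add: prod.distrib)
next
  case False
  then show ?thesis unfolding pm_def by simp
qed

lemma pm_conj:
  fixes A :: "nat \<Rightarrow> nat \<Rightarrow> 'a::field"
  assumes d: "\<And>i. i \<in> S \<Longrightarrow> d i \<noteq> 0"
  shows "pm S (\<lambda>i j. d i * A i j / d j) = pm S A"
  unfolding pm_def
proof (intro sum.cong refl)
  fix \<sigma> assume "\<sigma> \<in> {\<sigma>. \<sigma> permutes S}"
  then have p: "\<sigma> permutes S" by simp
  have e: "(\<Prod>i\<in>S. d (\<sigma> i)) = (\<Prod>i\<in>S. d i)"
    using prod.permute[OF p, of d] by (simp add: comp_def)
  have nz: "(\<Prod>i\<in>S. d i) \<noteq> 0" using d by (cases "finite S") (auto simp: prod_zero_iff)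
  have "(\<Prod>i\<in>S. d i * A i (\<sigma> i) / d (\<sigma> i)) = (\<Prod>i\<in>S. d i) * (\<Prod>i\<in>S. A i (\<sigma> i)) / (\<Prod>i\<in>S. d (\<sigma> i))"
    by (simp add: prod.distrib prod_dividef)
  also have "\<dots> = (\<Prod>i\<in>S. A i (\<sigma> i))" using e nz by simp
  finally show "of_int (sign \<sigma>) * (\<Prod>i\<in>S. d i * A i (\<sigma> i) / d (\<sigma> i)) = of_int (sign \<sigma>) * (\<Prod>i\<in>S. A i (\<sigma> i))" by simp
qed

lemma pm_reindex:
  fixes A :: "nat \<Rightarrow> nat \<Rightarrow> 'a::comm_ring_1"
  assumes f: "bij_betw f S T" and fin: "finite S"
  shows "pm S (\<lambda>i j. A (f i) (f j)) = pm T A"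
proof -
  let ?m = "map_permutation S f"
  have inj: "inj_on f S" using f bij_betw_imp_inj_on by blast
  have fS: "f ` S = T" using f bij_betw_imp_surj_on by blast
  have bij: "bij_betw ?m {\<sigma>. \<sigma> permutes S} {\<tau>. \<tau> permutes T}"
  proof (rule bij_betw_byWitness[where f' = "map_permutation T (inv_into S f)"])
    show "\<forall>a\<in>{\<sigma>. \<sigma> permutes S}. map_permutation T (inv_into S f) (?m a) = a"
      using map_permutation_compose_inv[OF f] inv_into_f_f[OF inj] by auto
    have f': "bij_betw (inv_into S f) T S" using bij_betw_inv_into[OF f] .
    show "\<forall>a'\<in>{\<tau>. \<tau> permutes T}. ?m (map_permutation T (inv_into S f) a') = a'"
    proof
      fix \<tau> assume "\<tau> \<in> {\<tau>. \<tau> permutes T}"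
      then show "?m (map_permutation T (inv_into S f) \<tau>) = \<tau>"
        using map_permutation_compose_inv[OF f', of \<tau> f] f_inv_into_f[of _ f S] fS by auto
    qed
    show "?m ` {\<sigma>. \<sigma> permutes S} \<subseteq> {\<tau>. \<tau> permutes T}"
      using map_permutation_permutes[OF f] by auto
    show "map_permutation T (inv_into S f) ` {\<tau>. \<tau> permutes T} \<subseteq> {\<sigma>. \<sigma> permutes S}"
      using map_permutation_permutes[OF f'] by auto
  qed
  have "pm T A = (\<Sum>\<sigma>\<in>{\<sigma>. \<sigma> permutes S}. of_int (sign (?m \<sigma>)) * (\<Prod>j\<in>T. A j (?m \<sigma> j)))"
    unfolding pm_def by (rule sum.reindex_bij_betw[OF bij, symmetric])
  also have "\<dots> = pm S (\<lambda>i j. A (f i) (f j))"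
    unfolding pm_def
  proof (intro sum.cong refl)
    fix \<sigma> assume "\<sigma> \<in> {\<sigma>. \<sigma> permutes S}"
    then have p: "\<sigma> permutes S" by simp
    have s: "sign (?m \<sigma>) = sign \<sigma>" using sign_map_permutation[OF inj p fin] .
    have "(\<Prod>j\<in>T. A j (?m \<sigma> j)) = (\<Prod>i\<in>S. A (f i) (?m \<sigma> (f i)))"
      using prod.reindex[OF inj, of "\<lambda>j. A j (?m \<sigma> j)"] fS by simp
    also have "\<dots> = (\<Prod>i\<in>S. A (f i) (f (\<sigma> i)))"
      by (intro prod.cong refl) (simp add: map_permutation_apply[OF inj])
    finally show "of_int (sign (?m \<sigma>)) * (\<Prod>j\<in>T. A j (?m \<sigma> j)) = of_int (sign \<sigma>) * (\<Prod>i\<in>S. A (f i) (f (\<sigma> i)))"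
      using s by simp
  qed
  finally show ?thesis by simp
qed

lemma det_pm:
  "Determinant.det (mat n n (\<lambda>(i,j). A i j)) = pm {0..<n} A"
  unfolding pm_def by (subst det_def'[of _ n]) (auto intro!: sum.cong prod.cong simp: permutes_def)

definition esym :: "nat \<Rightarrow> nat \<Rightarrow> (nat \<Rightarrow> nat \<Rightarrow> 'a::comm_ring_1) \<Rightarrow> 'a" where
  "esym n k A = (\<Sum>I\<in>{I. I \<subseteq> {1..n} \<and> card I = k}. pm I A)"

lemma det_expand:
  fixes A :: "nat \<Rightarrow> nat \<Rightarrow> 'a::comm_ring_1"
  shows "Determinant.det (mat n n (\<lambda>(i,j). (if i = j then 1 else 0) + t * A (Suc i) (Suc j)))
     = (\<Sum>k\<le>n. t ^ k * esym n k A)"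
proof -
  have "Determinant.det (mat n n (\<lambda>(i,j). (if i = j then 1 else 0) + t * A (Suc i) (Suc j)))
      = (\<Sum>I\<in>Pow {0..<n}. t ^ card I * pm I (\<lambda>i j. A (Suc i) (Suc j)))"
    by (simp add: det_pm pm_expand)
  also have "\<dots> = (\<Sum>I\<in>Pow {0..<n}. t ^ card (Suc ` I) * pm (Suc ` I) A)"
  proof (intro sum.cong refl)
    fix I assume "I \<in> Pow {0..<n}"
    then have fI: "finite I" by (auto intro: finite_subset)
    have "bij_betw Suc I (Suc ` I)" by (simp add: bij_betw_imageI)
    then show "t ^ card I * pm I (\<lambda>i j. A (Suc i) (Suc j)) = t ^ card (Suc ` I) * pm (Suc ` I) A"
      using pm_reindex[of Suc I "Suc ` I" A] fI by (simp add: card_image)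
  qed
  also have "\<dots> = (\<Sum>J\<in>Pow {1..n}. t ^ card J * pm J A)"
  proof -
    have inj: "inj_on (image Suc) (Pow {0..<n})" by (simp add: inj_on_def inj_image_eq_iff)
    have im: "image Suc ` Pow {0..<n} = Pow {1..n}"
    proof (rule Set.set_eqI, rule iffI)
      fix J assume "J \<in> Pow {1..n}"
      then have "J = Suc ` ((\<lambda>j. j - 1) ` J)" "(\<lambda>j. j - 1) ` J \<in> Pow {0..<n}"
        by (force simp: image_iff)+
      then show "J \<in> image Suc ` Pow {0..<n}" by blast
    qed auto
    show ?thesis using sum.reindex[OF inj, of "\<lambda>J. t ^ card J * pm J A"] im by simp
  qed
  also have "\<dots> = (\<Sum>k\<le>n. \<Sum>J\<in>{J\<in>Pow {1..n}. card J = k}. t ^ card J * pm J A)"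
    by (rule sum.group[symmetric]) (auto simp: card_mono[of "{1..n}", simplified] intro: card_mono)
  also have "\<dots> = (\<Sum>k\<le>n. t ^ k * esym n k A)"
    unfolding esym_def sum_distrib_left
    by (intro sum.cong refl) auto
  finally show ?thesis .
qed

definition Agen :: "nat \<Rightarrow> nat \<Rightarrow> real \<Rightarrow> (nat \<Rightarrow> real) \<Rightarrow> (nat \<Rightarrow> real) \<Rightarrow> nat \<Rightarrow> nat \<Rightarrow> real" where
  "Agen n m c Z W i j = (if i = j then - (\<Sum>k\<in>{..<n} - {i}. (Z i + Z k) / (Z i - Z k)) + c
       + (\<Sum>q<m. (Z i - W q) / (Z i + W q)) else 2 * Z j / (Z i - Z j))"

definition DU :: "nat \<Rightarrow> nat \<Rightarrow> (nat \<Rightarrow> real) \<Rightarrow> (nat \<Rightarrow> real) \<Rightarrow> nat \<Rightarrow> nat \<Rightarrow> real" where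
  "DU N M Z W m n = (if m = n then -2 + (\<Sum>k<N. 2 * Z k / (Z k + W n))
      + (\<Sum>m'\<in>{..<M} - {n}. 2 * W m' / (W n - W m')) else -2 * W m / (W n - W m))"

lemma perk_gen: fixes x z a b S :: real assumes "x \<noteq> z" and d: "a - b = (z - x) * S"
  shows "2 * z / (x - z) * a - (x + z) / (x - z) * b = - b - 2 * (z * S)"
proof -
  have e1: "2 * z / (x - z) * a - (x + z) / (x - z) * b = - b + 2 * z * (a - b) / (x - z)"
    using assms(1) by (simp add: divide_simps) (simp add: algebra_simps)
  have e2: "2 * z * ((z - x) * S) / (x - z) = - 2 * (z * S)"
    using assms(1) by (simp add: divide_simps) (simp add: algebra_simps)
  show ?thesis unfolding e1 d e2 by simp
qed

lemma perk: fixes x z :: real assumes "x \<noteq> z"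
  shows "2 * z / (x - z) * z ^ e - (x + z) / (x - z) * x ^ e = - (x ^ e) - 2 * (\<Sum>i<e. x ^ (e - Suc i) * z ^ Suc i)"
proof -
  have d: "z ^ e - x ^ e = (z - x) * (\<Sum>i<e. x ^ (e - Suc i) * z ^ i)" by (rule power_diff_sumr2)
  have S: "z * (\<Sum>i<e. x ^ (e - Suc i) * z ^ i) = (\<Sum>i<e. x ^ (e - Suc i) * z ^ Suc i)"
    unfolding sum_distrib_left by (intro sum.cong refl) (simp only: power_Suc mult.left_commute)
  show ?thesis using perk_gen[OF assms d] unfolding S .
qed

lemma perq_gen: fixes x w b S c :: real assumes "x + w \<noteq> 0" and d: "b = (x + w) * S + c"
  shows "(x - w) / (x + w) * b = b - 2 * (w * S) - 2 * w * c / (x + w)"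
  unfolding d using assms(1) by (simp add: divide_simps) (simp add: algebra_simps)

lemma perq: fixes x w :: real assumes "x + w \<noteq> 0"
  shows "(x - w) / (x + w) * x ^ e = x ^ e - 2 * (\<Sum>i<e. w * (- w) ^ (e - Suc i) * x ^ i) - 2 * w * (- w) ^ e / (x + w)"
proof -
  have d: "x ^ e - (- w) ^ e = (x - (- w)) * (\<Sum>i<e. (- w) ^ (e - Suc i) * x ^ i)" by (rule power_diff_sumr2)
  have xe: "x ^ e = (x + w) * (\<Sum>i<e. (- w) ^ (e - Suc i) * x ^ i) + (- w) ^ e" using d by simp
  have S: "w * (\<Sum>i<e. (- w) ^ (e - Suc i) * x ^ i) = (\<Sum>i<e. w * (- w) ^ (e - Suc i) * x ^ i)"
    unfolding sum_distrib_left by (simp only: mult.assoc)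
  show ?thesis using perq_gen[OF assms xe] unfolding S .
qed

definition Gm :: "(nat \<Rightarrow> real) \<Rightarrow> nat \<Rightarrow> nat \<Rightarrow> real" where
  "Gm W q e = -2 * W q * (- W q) ^ e"

definition Tm :: "nat \<Rightarrow> nat \<Rightarrow> (nat \<Rightarrow> real) \<Rightarrow> (nat \<Rightarrow> real) \<Rightarrow> nat \<Rightarrow> nat \<Rightarrow> real" where
  "Tm N M Z W a e = (if a = e then 2 * real e else if a < e then
      -2 * (\<Sum>k<N. Z k ^ (e - a)) - 2 * (\<Sum>q<M. W q * (- W q) ^ (e - Suc a)) else 0)"

lemma dist_helper: fixes a b c d X :: real shows "(- a + c + b) * X + d = (d - a * X) + c * X + b * X"
  by (simp add: algebra_simps)

lemma I2_arith: fixes a l m X P Q G E :: real assumes "- a + l + m = 1"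
  shows "(- (a * X) - 2 * P + 2 * E * X) + l * X + (m * X - 2 * Q + G) = X + G + (2 * E * X - 2 * P - 2 * Q)"
proof -
  have "X * (- a + l + m) = X" using assms by simp
  then show ?thesis by (simp add: algebra_simps)
qed

lemma sum_helper1: fixes F :: "nat \<Rightarrow> real"
  shows "(\<Sum>k\<in>K. - X - 2 * F k) = - (real (card K) * X) - 2 * (\<Sum>k\<in>K. F k)"
proof -
  have "(\<Sum>k\<in>K. - X - 2 * F k) = (\<Sum>k\<in>K. - X) - (\<Sum>k\<in>K. 2 * F k)" by (rule sum_subtractf)
  moreover have "(\<Sum>k\<in>K. - X) = - (real (card K) * X)" by simp
  moreover have "(\<Sum>k\<in>K. 2 * F k) = 2 * (\<Sum>k\<in>K. F k)" by (rule sum_distrib_left[symmetric])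
  ultimately show ?thesis by simp
qed

lemma sum_helper2: fixes F G H :: "nat \<Rightarrow> real"
  shows "(\<Sum>q\<in>A. X - 2 * F q - 2 * G q) = real (card A) * X - 2 * (\<Sum>q\<in>A. F q) - 2 * (\<Sum>q\<in>A. G q)"
proof -
  have "(\<Sum>q\<in>A. X - 2 * F q - 2 * G q) = (\<Sum>q\<in>A. X) - (\<Sum>q\<in>A. 2 * F q) - (\<Sum>q\<in>A. 2 * G q)"
    by (simp only: sum_subtractf)
  moreover have "(\<Sum>q\<in>A. X) = real (card A) * X" by simp
  moreover have "(\<Sum>k\<in>A. 2 * F k) = 2 * (\<Sum>k\<in>A. F k)" by (rule sum_distrib_left[symmetric])
  moreover have "(\<Sum>k\<in>A. 2 * G k) = 2 * (\<Sum>k\<in>A. G k)" by (rule sum_distrib_left[symmetric])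
  ultimately show ?thesis by simp
qed

lemma final_arith: fixes A B Cq Dq s w a b c :: real
  assumes y: "s + w \<noteq> 0" and abc: "-a + b + c = 0" and D: "Cq / (s + w) + Dq = -B"
  shows "(A / (s + w) - a / (s + w)) + b / (s + w) + ((s - w) / ((s + w) * (s + w)) + (c / (s + w) - B))
     = 1 / (s + w) + (- 2 + 2 * s / (s + w) + A + Cq) / (s + w) + Dq"
proof -
  have Dq: "Dq = -B - Cq / (s + w)" using D by simp
  have c: "c = a - b" using abc by simp
  show ?thesis unfolding Dq c using y by (simp add: divide_simps) (simp add: algebra_simps)
qed

context
  fixes N M :: nat and Z W :: "nat \<Rightarrow> real"
  assumes Zpos: "\<And>i. i < N \<Longrightarrow> Z i > 0" and Zinj: "inj_on Z {..<N}"
    and Wpos: "\<And>i. i < M \<Longrightarrow> W i > 0" and Winj: "inj_on W {..<M}"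
    and MN: "M \<le> N"
begin

lemma I1:
  assumes j: "j < N" and n: "n < M"
  shows "(\<Sum>k<N. Agen N M (real (N - M)) Z W j k * (1 / (Z k + W n)))
       = 1 / (Z j + W n) + (\<Sum>m<M. (1 / (Z j + W m)) * DU N M Z W m n)"
proof -
  define s where "s = Z j"
  define w where "w = W n"
  define K where "K = {..<N} - {j}"
  define Q where "Q = {..<M} - {n}"
  have s0: "s > 0" using Zpos j s_def by auto
  have w0: "w > 0" using Wpos n w_def by auto
  have sw: "s + w \<noteq> 0" using s0 w0 by auto
  have Kne: "\<And>k. k \<in> K \<Longrightarrow> s - Z k \<noteq> 0"
    using Zinj j unfolding K_def s_def inj_on_def by force
  have Kpos: "\<And>k. k \<in> K \<Longrightarrow> Z k > 0" using Zpos unfolding K_def by auto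
  have Qne: "\<And>q. q \<in> Q \<Longrightarrow> w - W q \<noteq> 0"
    using Winj n unfolding Q_def w_def inj_on_def by force
  have Qpos: "\<And>q. q \<in> Q \<Longrightarrow> W q > 0" using Wpos unfolding Q_def by auto
  have cK: "card K = N - 1" using j unfolding K_def by simp
  have cQ: "card Q = M - 1" using n unfolding Q_def by simp
  have fK: "finite K" "finite Q" unfolding K_def Q_def by auto
  have LHS: "(\<Sum>k<N. Agen N M (real (N - M)) Z W j k * (1 / (Z k + W n)))
     = (\<Sum>k\<in>K. 2 * Z k / ((Z k + w) * (s + w)) - 1 / (s + w)) + real (N - M) / (s + w)
       + (\<Sum>q<M. (s - W q) / ((s + W q) * (s + w)))"
  proof -
    have "(\<Sum>k<N. Agen N M (real (N - M)) Z W j k * (1 / (Z k + W n)))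
       = Agen N M (real (N - M)) Z W j j * (1 / (s + w)) + (\<Sum>k\<in>K. Agen N M (real (N - M)) Z W j k * (1 / (Z k + w)))"
      unfolding K_def s_def w_def using j by (subst sum.remove[of _ j]) auto
    also have "\<dots> = (- (\<Sum>k\<in>K. (s + Z k) / (s - Z k)) + real (N - M) + (\<Sum>q<M. (s - W q) / (s + W q))) * (1 / (s + w))
        + (\<Sum>k\<in>K. 2 * Z k / (s - Z k) * (1 / (Z k + w)))"
      unfolding Agen_def K_def s_def by (intro arg_cong2[where f="(+)"] sum.cong) auto
    also have "\<dots> = (\<Sum>k\<in>K. 2 * Z k / (s - Z k) * (1 / (Z k + w)) - (s + Z k) / (s - Z k) / (s + w)) + real (N - M) / (s + w)
       + (\<Sum>q<M. (s - W q) / ((s + W q) * (s + w)))"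
    proof -
      have e1: "(- (\<Sum>k\<in>K. (s + Z k) / (s - Z k)) + real (N - M) + (\<Sum>q<M. (s - W q) / (s + W q))) * (1 / (s + w))
          = - ((\<Sum>k\<in>K. (s + Z k) / (s - Z k)) / (s + w)) + real (N - M) / (s + w) + (\<Sum>q<M. (s - W q) / (s + W q)) / (s + w)"
        by (simp add: ring_distribs divide_inverse)
      show ?thesis unfolding e1 sum_divide_distrib divide_divide_eq_left sum_subtractf by simp
    qed
    also have "(\<Sum>k\<in>K. 2 * Z k / (s - Z k) * (1 / (Z k + w)) - (s + Z k) / (s - Z k) / (s + w))
        = (\<Sum>k\<in>K. 2 * Z k / ((Z k + w) * (s + w)) - 1 / (s + w))"
    proof (intro sum.cong refl)
      fix k assume k: "k \<in> K"
      have a: "s - Z k \<noteq> 0" using Kne k by auto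
      have b: "Z k + w \<noteq> 0" using Kpos[OF k] w0 by auto
      show "2 * Z k / (s - Z k) * (1 / (Z k + w)) - (s + Z k) / (s - Z k) / (s + w)
          = 2 * Z k / ((Z k + w) * (s + w)) - 1 / (s + w)"
        using a b sw by (simp add: divide_simps) (simp add: algebra_simps)
    qed
    finally show ?thesis .
  qed
  have L2: "(\<Sum>q<M. (s - W q) / ((s + W q) * (s + w)))
      = (s - w) / ((s + w) * (s + w)) + (\<Sum>q\<in>Q. 1 / (s + w) - 2 * W q / ((s + W q) * (s + w)))"
  proof -
    have "(\<Sum>q<M. (s - W q) / ((s + W q) * (s + w))) = (s - w) / ((s + w) * (s + w)) + (\<Sum>q\<in>Q. (s - W q) / ((s + W q) * (s + w)))"
      unfolding Q_def w_def using n by (subst sum.remove[of _ n]) auto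
    also have "(\<Sum>q\<in>Q. (s - W q) / ((s + W q) * (s + w))) = (\<Sum>q\<in>Q. 1 / (s + w) - 2 * W q / ((s + W q) * (s + w)))"
    proof (intro sum.cong refl)
      fix q assume q: "q \<in> Q"
      have "s + W q \<noteq> 0" using Qpos[OF q] s0 by auto
      then show "(s - W q) / ((s + W q) * (s + w)) = 1 / (s + w) - 2 * W q / ((s + W q) * (s + w))"
        using sw by (simp add: divide_simps) (simp add: algebra_simps)?
    qed
    finally show ?thesis .
  qed
  have RHS: "1 / (Z j + W n) + (\<Sum>m<M. (1 / (Z j + W m)) * DU N M Z W m n)
     = 1 / (s + w) + (-2 + 2 * s / (s + w) + (\<Sum>k\<in>K. 2 * Z k / (Z k + w)) + (\<Sum>m\<in>Q. 2 * W m / (w - W m))) / (s + w)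
       + (\<Sum>m\<in>Q. (1 / (s + W m)) * (-2 * W m / (w - W m)))"
  proof -
    have "(\<Sum>m<M. (1 / (Z j + W m)) * DU N M Z W m n) = (1 / (s + w)) * DU N M Z W n n + (\<Sum>m\<in>Q. (1 / (s + W m)) * DU N M Z W m n)"
      unfolding Q_def s_def w_def using n by (subst sum.remove[of _ n]) auto
    also have "DU N M Z W n n = -2 + 2 * s / (s + w) + (\<Sum>k\<in>K. 2 * Z k / (Z k + w)) + (\<Sum>m\<in>Q. 2 * W m / (w - W m))"
      unfolding DU_def K_def Q_def s_def w_def using j by (simp add: sum.remove[of "{..<N}" j])
    also have "(\<Sum>m\<in>Q. (1 / (s + W m)) * DU N M Z W m n) = (\<Sum>m\<in>Q. (1 / (s + W m)) * (-2 * W m / (w - W m)))"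
      unfolding DU_def Q_def w_def by (intro sum.cong) auto
    finally show ?thesis unfolding s_def w_def by (simp add: field_simps)
  qed
  have Qterm: "(\<Sum>m\<in>Q. 2 * W m / (w - W m)) / (s + w) + (\<Sum>m\<in>Q. (1 / (s + W m)) * (-2 * W m / (w - W m)))
       = - (\<Sum>q\<in>Q. 2 * W q / ((s + W q) * (s + w)))"
  proof -
    have "(\<Sum>m\<in>Q. 2 * W m / (w - W m)) / (s + w) + (\<Sum>m\<in>Q. (1 / (s + W m)) * (-2 * W m / (w - W m)))
        = (\<Sum>m\<in>Q. 2 * W m / (w - W m) / (s + w) + (1 / (s + W m)) * (-2 * W m / (w - W m)))"
      by (simp only: sum_divide_distrib sum.distrib)
    also have "\<dots> = (\<Sum>q\<in>Q. - (2 * W q / ((s + W q) * (s + w))))"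
    proof (intro sum.cong refl)
      fix q assume q: "q \<in> Q"
      have "s + W q \<noteq> 0" using Qpos[OF q] s0 by auto
      then show "2 * W q / (w - W q) / (s + w) + (1 / (s + W q)) * (-2 * W q / (w - W q)) = - (2 * W q / ((s + W q) * (s + w)))"
        using sw Qne[OF q] by (simp add: divide_simps) (simp add: algebra_simps)
    qed
    finally show ?thesis by (simp add: sum_negf)
  qed
  have Kterm: "(\<Sum>k\<in>K. 2 * Z k / ((Z k + w) * (s + w)) - 1 / (s + w))
      = (\<Sum>k\<in>K. 2 * Z k / (Z k + w)) / (s + w) - real (N - 1) / (s + w)"
    using cK by (simp add: sum_subtractf sum_divide_distrib)
  have Qc: "(\<Sum>q\<in>Q. 1 / (s + w) - 2 * W q / ((s + W q) * (s + w)))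
      = real (M - 1) / (s + w) - (\<Sum>q\<in>Q. 2 * W q / ((s + W q) * (s + w)))"
    using cQ by (simp add: sum_subtractf)
  have cst: "- real (N - 1) + real (N - M) + real (M - 1) = 0" using MN j n by linarith
  show ?thesis
    unfolding LHS L2 RHS Kterm Qc
    by (rule final_arith[OF sw cst Qterm])
qed


lemma I2:
  assumes j: "j < N" and e: "e < N - M"
  shows "(\<Sum>k<N. Agen N M (real (N - M)) Z W j k * Z k ^ e)
       = Z j ^ e + (\<Sum>q<M. (1 / (Z j + W q)) * Gm W q e) + (\<Sum>a<N - M. Z j ^ a * Tm N M Z W a e)"
proof -
  define x where "x = Z j"
  define K where "K = {..<N} - {j}"
  define p where "p r = (\<Sum>k<N. Z k ^ r)" for r
  have x0: "x > 0" using Zpos j x_def by auto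
  have Kne: "\<And>k. k \<in> K \<Longrightarrow> x \<noteq> Z k"
    using Zinj j unfolding K_def x_def inj_on_def by force
  have cK: "card K = N - 1" using j unfolding K_def by simp
  have fK: "finite K" unfolding K_def by auto
  have qne: "\<And>q. q < M \<Longrightarrow> x + W q \<noteq> 0" using Wpos x0 by (smt (verit))
  have "(\<Sum>k<N. Agen N M (real (N - M)) Z W j k * Z k ^ e)
      = Agen N M (real (N - M)) Z W j j * x ^ e + (\<Sum>k\<in>K. Agen N M (real (N - M)) Z W j k * Z k ^ e)"
    unfolding K_def x_def using j by (subst sum.remove[of _ j]) auto
  also have "\<dots> = (- (\<Sum>k\<in>K. (x + Z k) / (x - Z k)) + real (N - M) + (\<Sum>q<M. (x - W q) / (x + W q))) * x ^ e
        + (\<Sum>k\<in>K. 2 * Z k / (x - Z k) * Z k ^ e)"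
    unfolding Agen_def K_def x_def by (intro arg_cong2[where f="(+)"] sum.cong) auto
  also have "\<dots> = (\<Sum>k\<in>K. 2 * Z k / (x - Z k) * Z k ^ e - (x + Z k) / (x - Z k) * x ^ e)
        + real (N - M) * x ^ e + (\<Sum>q<M. (x - W q) / (x + W q) * x ^ e)"
    unfolding dist_helper sum_distrib_right sum_subtractf ..
  also have "(\<Sum>k\<in>K. 2 * Z k / (x - Z k) * Z k ^ e - (x + Z k) / (x - Z k) * x ^ e)
      = (\<Sum>k\<in>K. - (x ^ e) - 2 * (\<Sum>i<e. x ^ (e - Suc i) * Z k ^ Suc i))"
    by (intro sum.cong refl perk Kne)
  also have "(\<Sum>q<M. (x - W q) / (x + W q) * x ^ e)
      = (\<Sum>q<M. x ^ e - 2 * (\<Sum>i<e. W q * (- W q) ^ (e - Suc i) * x ^ i) - 2 * (W q * (- W q) ^ e / (x + W q)))"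
  proof (intro sum.cong refl)
    fix q assume "q \<in> {..<M}"
    then have q: "x + W q \<noteq> 0" using qne by simp
    show "(x - W q) / (x + W q) * x ^ e = x ^ e - 2 * (\<Sum>i<e. W q * (- W q) ^ (e - Suc i) * x ^ i) - 2 * (W q * (- W q) ^ e / (x + W q))"
      unfolding perq[OF q] by simp
  qed
  finally have L: "(\<Sum>k<N. Agen N M (real (N - M)) Z W j k * Z k ^ e)
      = (\<Sum>k\<in>K. - (x ^ e) - 2 * (\<Sum>i<e. x ^ (e - Suc i) * Z k ^ Suc i)) + real (N - M) * x ^ e +
        (\<Sum>q<M. x ^ e - 2 * (\<Sum>i<e. W q * (- W q) ^ (e - Suc i) * x ^ i) - 2 * (W q * (- W q) ^ e / (x + W q)))" .
  have A1: "(\<Sum>k\<in>K. - (x ^ e) - 2 * (\<Sum>i<e. x ^ (e - Suc i) * Z k ^ Suc i))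
      = - (real (N - 1) * x ^ e) - 2 * (\<Sum>i<e. x ^ (e - Suc i) * p (Suc i)) + 2 * real e * x ^ e"
  proof -
    have "(\<Sum>k\<in>K. - (x ^ e) - 2 * (\<Sum>i<e. x ^ (e - Suc i) * Z k ^ Suc i))
        = - (real (N - 1) * x ^ e) - 2 * (\<Sum>k\<in>K. \<Sum>i<e. x ^ (e - Suc i) * Z k ^ Suc i)"
      unfolding sum_helper1 cK ..
    also have "(\<Sum>k\<in>K. \<Sum>i<e. x ^ (e - Suc i) * Z k ^ Suc i) = (\<Sum>i<e. x ^ (e - Suc i) * (\<Sum>k\<in>K. Z k ^ Suc i))"
      unfolding sum_distrib_left by (rule sum.swap)
    also have "(\<Sum>i<e. x ^ (e - Suc i) * (\<Sum>k\<in>K. Z k ^ Suc i)) = (\<Sum>i<e. x ^ (e - Suc i) * p (Suc i) - x ^ e)"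
    proof (intro sum.cong refl)
      fix i assume i: "i \<in> {..<e}"
      have "(\<Sum>k\<in>K. Z k ^ Suc i) = p (Suc i) - x ^ Suc i"
        unfolding p_def K_def x_def using j by (simp add: sum.remove[of "{..<N}" j])
      moreover have "x ^ (e - Suc i) * x ^ Suc i = x ^ e" using i by (subst power_add[symmetric]) simp
      ultimately show "x ^ (e - Suc i) * (\<Sum>k\<in>K. Z k ^ Suc i) = x ^ (e - Suc i) * p (Suc i) - x ^ e"
        by (simp add: right_diff_distrib)
    qed
    also have "\<dots> = (\<Sum>i<e. x ^ (e - Suc i) * p (Suc i)) - real e * x ^ e" by (simp add: sum_subtractf)
    finally show ?thesis by (simp add: right_diff_distrib)
  qed
  have A2: "(\<Sum>q<M. x ^ e - 2 * (\<Sum>i<e. W q * (- W q) ^ (e - Suc i) * x ^ i) - 2 * (W q * (- W q) ^ e / (x + W q)))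
      = real M * x ^ e - 2 * (\<Sum>i<e. x ^ i * (\<Sum>q<M. W q * (- W q) ^ (e - Suc i))) + (\<Sum>q<M. (1 / (x + W q)) * Gm W q e)"
  proof -
    have g: "(\<Sum>q<M. (1 / (x + W q)) * Gm W q e) = - 2 * (\<Sum>q<M. W q * (- W q) ^ e / (x + W q))"
      unfolding Gm_def sum_distrib_left by (intro sum.cong refl) simp
    have sw: "(\<Sum>q<M. \<Sum>i<e. W q * (- W q) ^ (e - Suc i) * x ^ i) = (\<Sum>i<e. x ^ i * (\<Sum>q<M. W q * (- W q) ^ (e - Suc i)))"
      unfolding sum_distrib_left by (subst sum.swap) (simp only: mult.commute)
    show ?thesis unfolding sum_helper2 g sw by simp
  qed
  have R: "(\<Sum>a<N - M. x ^ a * Tm N M Z W a e) = 2 * real e * x ^ e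
       - 2 * (\<Sum>a<e. x ^ a * p (e - a)) - 2 * (\<Sum>a<e. x ^ a * (\<Sum>q<M. W q * (- W q) ^ (e - Suc a)))"
  proof -
    have "(\<Sum>a<N - M. x ^ a * Tm N M Z W a e) = (\<Sum>a<Suc e. x ^ a * Tm N M Z W a e)"
      using e by (intro sum.mono_neutral_right) (auto simp: Tm_def)
    also have "\<dots> = (\<Sum>a<e. x ^ a * Tm N M Z W a e) + x ^ e * Tm N M Z W e e"
      by simp
    also have "(\<Sum>a<e. x ^ a * Tm N M Z W a e) = (\<Sum>a<e. - 2 * (x ^ a * p (e - a)) - 2 * (x ^ a * (\<Sum>q<M. W q * (- W q) ^ (e - Suc a))))"
      by (intro sum.cong refl) (simp add: Tm_def p_def right_diff_distrib)
    also have "\<dots> = - 2 * (\<Sum>a<e. x ^ a * p (e - a)) - 2 * (\<Sum>a<e. x ^ a * (\<Sum>q<M. W q * (- W q) ^ (e - Suc a)))"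
      by (simp only: sum_subtractf sum_distrib_left[symmetric])
    also have "x ^ e * Tm N M Z W e e = 2 * real e * x ^ e" by (simp add: Tm_def)
    finally show ?thesis by simp
  qed
  have re: "(\<Sum>a<e. x ^ a * p (e - a)) = (\<Sum>i<e. x ^ (e - Suc i) * p (Suc i))"
  proof -
    have "(\<Sum>i<e. x ^ (e - Suc i) * p (Suc i)) = (\<Sum>i<e. (\<lambda>a. x ^ a * p (e - a)) (e - Suc i))"
      by (intro sum.cong refl) (simp add: Suc_diff_Suc)
    also have "\<dots> = (\<Sum>a<e. x ^ a * p (e - a))" by (rule sum.nat_diff_reindex)
    finally show ?thesis by simp
  qed
  have cst: "- real (N - 1) + real (N - M) + real M = 1" using j MN by linarith
  show ?thesis unfolding L A1 A2 R re x_def[symmetric]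
    by (rule I2_arith[OF cst])
qed

end

definition Wm :: "nat \<Rightarrow> (nat \<Rightarrow> real) \<Rightarrow> (nat \<Rightarrow> real) \<Rightarrow> nat \<Rightarrow> nat \<Rightarrow> real" where
  "Wm M Z W j c = (if c < M then 1 / (Z j + W c) else Z j ^ (c - M))"

definition Dbig :: "nat \<Rightarrow> nat \<Rightarrow> (nat \<Rightarrow> real) \<Rightarrow> (nat \<Rightarrow> real) \<Rightarrow> nat \<Rightarrow> nat \<Rightarrow> real" where
  "Dbig N M Z W a b = (if a < M then (if b < M then DU N M Z W a b else Gm W a (b - M))
      else (if b < M then 0 else Tm N M Z W (a - M) (b - M)))"

lemma sum_split_MN:
  fixes f :: "nat \<Rightarrow> 'a::comm_monoid_add"
  assumes "M \<le> N"
  shows "(\<Sum>c<N. f c) = (\<Sum>c<M. f c) + (\<Sum>e<N - M. f (M + e))"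
proof -
  have eq: "{..<N} = {..<M} \<union> {M..<N}" using assms by auto
  have "(\<Sum>c<N. f c) = sum f ({..<M} \<union> {M..<N})" by (simp only: eq)
  also have "\<dots> = (\<Sum>c<M. f c) + (\<Sum>c\<in>{M..<N}. f c)"
    by (rule sum.union_disjoint) auto
  also have "(\<Sum>c\<in>{M..<N}. f c) = (\<Sum>e<N - M. f (M + e))"
  proof -
    have "(\<lambda>e. M + e) ` {..<N - M} = {M..<N}"
    proof (rule Set.set_eqI, rule iffI)
      fix c assume "c \<in> {M..<N}" then show "c \<in> (\<lambda>e. M + e) ` {..<N - M}"
        by (intro image_eqI[of _ _ "c - M"]) auto
    qed auto
    moreover have "inj_on (\<lambda>e. M + e) {..<N - M}" by (simp add: inj_on_def)
    ultimately show ?thesis using sum.reindex[of "\<lambda>e. M + e" "{..<N - M}" f] by simp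
  qed
  finally show ?thesis .
qed

lemma mat_mult_entry:
  fixes f g :: "nat \<times> nat \<Rightarrow> 'a::comm_ring_1"
  assumes "i < N" "j < N"
  shows "(mat N N f * mat N N g) $$ (i, j) = (\<Sum>k<N. f (i, k) * g (k, j))"
  using assms by (simp add: scalar_prod_def lessThan_atLeast0)

lemma pt1: fixes a b :: real assumes "a > 0" "b > 0" "a \<noteq> b"
  shows "- ((1 / a + 1 / b) / (1 / a - 1 / b)) = 2 * b / (a - b) + 1"
proof -
  have "a - b \<noteq> 0" using assms by simp
  then show ?thesis using assms by (simp add: divide_simps, (simp add: algebra_simps)?)
qed

lemma pt2: fixes a z :: real assumes "a > 0" "z > 0"
  shows "(1 / a - 1 / z) / (1 / a + 1 / z) = 2 * z / (z + a) - 1"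
proof -
  have "z + a \<noteq> 0" "a + z \<noteq> 0" using assms by simp_all
  then show ?thesis using assms by (simp add: divide_simps, (simp add: algebra_simps)?)
qed

lemma pt3: fixes a b :: real assumes "a > 0" "b > 0" "a \<noteq> b"
  shows "2 * (1 / b) / (1 / a - 1 / b) = a * (-2 * b / (a - b)) / b"
proof -
  have "a - b \<noteq> 0" "b - a \<noteq> 0" using assms by simp_all
  then show ?thesis using assms by (simp add: divide_simps, (simp add: algebra_simps)?)
qed

lemma poly_pos_roots_zero:
  fixes P :: "real poly"
  assumes "\<And>z. z > 0 \<Longrightarrow> poly P z = 0"
  shows "P = 0"
proof (rule ccontr)
  assume "P \<noteq> 0"
  then have "finite {x. poly P x = 0}" by (rule poly_roots_finite)
  moreover have "{0::real<..} \<subseteq> {x. poly P x = 0}" using assms by auto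
  ultimately have "finite {0::real<..}" by (rule finite_subset[rotated])
  then show False using infinite_Ioi by blast
qed

lemma coeff_sum_monom_lt:
  fixes f :: "nat \<Rightarrow> 'a::comm_ring_1"
  assumes "e < L"
  shows "coeff (\<Sum>e'<L. monom (f e') e') e = f e"
proof -
  have "coeff (\<Sum>e'<L. monom (f e') e') e = (\<Sum>e'<L. if e' = e then f e' else 0)"
    unfolding coeff_sum coeff_monom by (intro sum.cong refl)
  also have "\<dots> = f e" using assms by (simp add: sum.delta')
  finally show ?thesis .
qed

context
  fixes N M :: nat and Z W :: "nat \<Rightarrow> real"
  assumes Zpos: "\<And>i. i < N \<Longrightarrow> Z i > 0" and Zinj: "inj_on Z {..<N}"
    and Wpos: "\<And>i. i < M \<Longrightarrow> W i > 0" and Winj: "inj_on W {..<M}"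
    and MN: "M \<le> N"
begin

lemma Icomb:
  assumes j: "j < N" and c: "c < N"
  shows "(\<Sum>k<N. Agen N M (real (N - M)) Z W j k * Wm M Z W k c)
       = Wm M Z W j c + (\<Sum>c'<N. Wm M Z W j c' * Dbig N M Z W c' c)"
proof (cases "c < M")
  case True
  have "(\<Sum>c'<N. Wm M Z W j c' * Dbig N M Z W c' c) = (\<Sum>m<M. (1 / (Z j + W m)) * DU N M Z W m c)"
    unfolding sum_split_MN[OF MN] using True by (simp add: Wm_def Dbig_def)
  then show ?thesis using I1[OF Zpos Zinj Wpos Winj MN j True] True by (simp add: Wm_def)
next
  case False
  define e where "e = c - M"
  have e: "e < N - M" using False c e_def by auto
  have ce: "c = M + e" using False e_def by auto
  have "(\<Sum>c'<N. Wm M Z W j c' * Dbig N M Z W c' c)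
      = (\<Sum>q<M. (1 / (Z j + W q)) * Gm W q e) + (\<Sum>a<N - M. Z j ^ a * Tm N M Z W a e)"
    unfolding sum_split_MN[OF MN] using False by (simp add: Wm_def Dbig_def e_def)
  moreover have "(\<Sum>k<N. Agen N M (real (N - M)) Z W j k * Wm M Z W k c) = (\<Sum>k<N. Agen N M (real (N - M)) Z W j k * Z k ^ e)"
    using False by (simp add: Wm_def e_def)
  ultimately show ?thesis using I2[OF Zpos Zinj Wpos Winj MN j e] False by (simp add: Wm_def e_def)
qed

lemma mat_relation:
  "mat N N (\<lambda>(i,j). (if i = j then 1 else 0) + t * Agen N M (real (N - M)) Z W i j) * mat N N (\<lambda>(i,j). Wm M Z W i j)
   = mat N N (\<lambda>(i,j). Wm M Z W i j) * mat N N (\<lambda>(a,b). (if a = b then 1 else 0) + t * ((if a = b then 1 else 0) + Dbig N M Z W a b))"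
proof (rule eq_matI)
  fix j c assume "j < dim_row (mat N N (\<lambda>(i,j). Wm M Z W i j) * mat N N (\<lambda>(a,b). (if a = b then 1 else 0) + t * ((if a = b then 1 else 0) + Dbig N M Z W a b)))"
    "c < dim_col (mat N N (\<lambda>(i,j). Wm M Z W i j) * mat N N (\<lambda>(a,b). (if a = b then 1 else 0) + t * ((if a = b then 1 else 0) + Dbig N M Z W a b)))"
  then have j: "j < N" and c: "c < N" by auto
  have l: "(\<Sum>k<N. ((if j = k then 1 else 0) + t * Agen N M (real (N - M)) Z W j k) * Wm M Z W k c)
      = Wm M Z W j c + t * (\<Sum>k<N. Agen N M (real (N - M)) Z W j k * Wm M Z W k c)"
  proof -
    have "(\<Sum>k<N. ((if j = k then 1 else 0) + t * Agen N M (real (N - M)) Z W j k) * Wm M Z W k c)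
        = (\<Sum>k<N. (if k = j then Wm M Z W k c else 0) + t * (Agen N M (real (N - M)) Z W j k * Wm M Z W k c))"
      by (intro sum.cong refl) (auto simp: algebra_simps)
    also have "\<dots> = Wm M Z W j c + t * (\<Sum>k<N. Agen N M (real (N - M)) Z W j k * Wm M Z W k c)"
      using j by (simp only: sum.distrib sum.delta sum_distrib_left[symmetric]) simp
    finally show ?thesis .
  qed
  have r: "(\<Sum>k<N. Wm M Z W j k * ((if k = c then 1 else 0) + t * ((if k = c then 1 else 0) + Dbig N M Z W k c)))
      = Wm M Z W j c + t * (Wm M Z W j c + (\<Sum>k<N. Wm M Z W j k * Dbig N M Z W k c))"
  proof -
    have "(\<Sum>k<N. Wm M Z W j k * ((if k = c then 1 else 0) + t * ((if k = c then 1 else 0) + Dbig N M Z W k c)))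
        = (\<Sum>k<N. (if k = c then Wm M Z W j k + t * Wm M Z W j k else 0) + t * (Wm M Z W j k * Dbig N M Z W k c))"
      by (intro sum.cong refl) (auto simp: algebra_simps)
    also have "\<dots> = Wm M Z W j c + t * (Wm M Z W j c + (\<Sum>k<N. Wm M Z W j k * Dbig N M Z W k c))"
      using c by (simp only: sum.distrib sum.delta sum_distrib_left[symmetric]) (simp add: algebra_simps)
    finally show ?thesis .
  qed
  show "(mat N N (\<lambda>(i,j). (if i = j then 1 else 0) + t * Agen N M (real (N - M)) Z W i j) * mat N N (\<lambda>(i,j). Wm M Z W i j)) $$ (j, c)
    = (mat N N (\<lambda>(i,j). Wm M Z W i j) * mat N N (\<lambda>(a,b). (if a = b then 1 else 0) + t * ((if a = b then 1 else 0) + Dbig N M Z W a b))) $$ (j, c)"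
    unfolding mat_mult_entry[OF j c] using l r Icomb[OF j c] by simp
qed auto


lemma Ay_diag:
  assumes n: "n < M"
  shows "Agen M N (real (N - M)) (\<lambda>n. 1 / W n) (\<lambda>k. 1 / Z k) n n = 1 + DU N M Z W n n"
proof -
  define Q where "Q = {..<M} - {n}"
  have Wn: "W n > 0" using Wpos n by auto
  have cQ: "card Q = M - 1" using n unfolding Q_def by simp
  have "- (\<Sum>m\<in>Q. (1 / W n + 1 / W m) / (1 / W n - 1 / W m)) = (\<Sum>m\<in>Q. - ((1 / W n + 1 / W m) / (1 / W n - 1 / W m)))"
    by (simp add: sum_negf)
  also have "\<dots> = (\<Sum>m\<in>Q. 2 * W m / (W n - W m) + 1)"
  proof (intro sum.cong refl pt1)
    fix m assume m: "m \<in> Q"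
    then show "W n > 0" "W m > 0" using Wpos n unfolding Q_def by auto
    show "W n \<noteq> W m" using Winj m n unfolding Q_def inj_on_def by auto
  qed
  also have "\<dots> = (\<Sum>m\<in>Q. 2 * W m / (W n - W m)) + real (M - 1)"
    using cQ by (simp add: sum.distrib)
  finally have A: "- (\<Sum>m\<in>Q. (1 / W n + 1 / W m) / (1 / W n - 1 / W m)) = (\<Sum>m\<in>Q. 2 * W m / (W n - W m)) + real (M - 1)" .
  have "(\<Sum>k<N. (1 / W n - 1 / Z k) / (1 / W n + 1 / Z k)) = (\<Sum>k<N. 2 * Z k / (Z k + W n) - 1)"
    using Wn Zpos by (intro sum.cong refl pt2) auto
  also have "\<dots> = (\<Sum>k<N. 2 * Z k / (Z k + W n)) - real N"
    by (simp add: sum_subtractf)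
  finally have B: "(\<Sum>k<N. (1 / W n - 1 / Z k) / (1 / W n + 1 / Z k)) = (\<Sum>k<N. 2 * Z k / (Z k + W n)) - real N" .
  have cst: "real (M - 1) + real (N - M) - real N = 1 + (- 2)" using n MN by linarith
  have "Agen M N (real (N - M)) (\<lambda>n. 1 / W n) (\<lambda>k. 1 / Z k) n n
      = (\<Sum>m\<in>Q. 2 * W m / (W n - W m)) + real (M - 1) + real (N - M) + ((\<Sum>k<N. 2 * Z k / (Z k + W n)) - real N)"
    unfolding Agen_def Q_def[symmetric] using A B by simp
  also have "\<dots> = 1 + DU N M Z W n n"
    unfolding DU_def Q_def[symmetric] using cst by simp
  finally show ?thesis .
qed

lemma det_R1:
  "Determinant.det (mat M M (\<lambda>(a,b). (if a = b then 1 else 0) + t * ((if a = b then 1 else 0) + DU N M Z W a b)))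
   = Determinant.det (mat M M (\<lambda>(i,j). (if i = j then 1 else 0) + t * Agen M N (real (N - M)) (\<lambda>n. 1 / W n) (\<lambda>k. 1 / Z k) i j))"
proof -
  let ?R = "mat M M (\<lambda>(a,b). (if a = b then 1 else 0) + t * ((if a = b then 1 else 0) + DU N M Z W a b))"
  have "Determinant.det ?R = Determinant.det (transpose_mat ?R)"
    by (rule det_transpose[symmetric, of _ M]) simp
  also have "transpose_mat ?R = mat M M (\<lambda>(i,j). (if j = i then 1 else 0) + t * ((if j = i then 1 else 0) + DU N M Z W j i))"
    by (rule eq_matI) auto
  also have "Determinant.det \<dots> = pm {0..<M} (\<lambda>i j. (if j = i then 1 else 0) + t * ((if j = i then 1 else 0) + DU N M Z W j i))"
    by (rule det_pm)
  also have "\<dots> = pm {0..<M} (\<lambda>i j. W i * ((if j = i then 1 else 0) + t * ((if j = i then 1 else 0) + DU N M Z W j i)) / W j)"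
    by (rule pm_conj[symmetric]) (use Wpos in force)
  also have "\<dots> = pm {0..<M} (\<lambda>i j. (if i = j then 1 else 0) + t * Agen M N (real (N - M)) (\<lambda>n. 1 / W n) (\<lambda>k. 1 / Z k) i j)"
    unfolding pm_def
  proof (intro sum.cong refl arg_cong2[where f="(*)"] prod.cong)
    fix \<sigma> i assume s: "\<sigma> \<in> {\<sigma>. \<sigma> permutes {0..<M}}" and i: "i \<in> {0..<M}"
    have si: "\<sigma> i < M" using s i permutes_in_image[of \<sigma> "{0..<M}" i] by auto
    have im: "i < M" using i by auto
    show "W i * ((if \<sigma> i = i then 1 else 0) + t * ((if \<sigma> i = i then 1 else 0) + DU N M Z W (\<sigma> i) i)) / W (\<sigma> i)
        = (if i = \<sigma> i then 1 else 0) + t * Agen M N (real (N - M)) (\<lambda>n. 1 / W n) (\<lambda>k. 1 / Z k) i (\<sigma> i)"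
    proof (cases "\<sigma> i = i")
      case True
      have "W i \<noteq> 0" using Wpos im by force
      then show ?thesis using True Ay_diag[OF im] by simp
    next
      case False
      have ne: "W i \<noteq> W (\<sigma> i)" using Winj False im si unfolding inj_on_def by auto
      have "Agen M N (real (N - M)) (\<lambda>n. 1 / W n) (\<lambda>k. 1 / Z k) i (\<sigma> i) = W i * (-2 * W (\<sigma> i) / (W i - W (\<sigma> i))) / W (\<sigma> i)"
        using False pt3[OF Wpos[OF im] Wpos[OF si] ne] unfolding Agen_def by simp
      then show ?thesis using False unfolding DU_def by simp
    qed
  qed
  also have "\<dots> = Determinant.det (mat M M (\<lambda>(i,j). (if i = j then 1 else 0) + t * Agen M N (real (N - M)) (\<lambda>n. 1 / W n) (\<lambda>k. 1 / Z k) i j))"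
    by (rule det_pm[symmetric])
  finally show ?thesis .
qed

lemma det_block:
  "Determinant.det (mat N N (\<lambda>(a,b). (if a = b then 1 else 0) + t * ((if a = b then 1 else 0) + Dbig N M Z W a b)))
   = Determinant.det (mat M M (\<lambda>(a,b). (if a = b then 1 else 0) + t * ((if a = b then 1 else 0) + DU N M Z W a b)))
     * (\<Prod>e<N - M. 1 + t * (1 + 2 * real e))"
proof -
  let ?R1 = "mat M M (\<lambda>(a,b). (if a = b then 1 else 0) + t * ((if a = b then 1 else 0) + DU N M Z W a b))"
  let ?R2 = "mat M (N - M) (\<lambda>(a,b). t * Gm W a b)"
  let ?R4 = "mat (N - M) (N - M) (\<lambda>(a,b). (if a = b then 1 else 0) + t * ((if a = b then 1 else 0) + Tm N M Z W a b))"
  have NM: "N = M + (N - M)" using MN by simp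
  have eq: "mat N N (\<lambda>(a,b). (if a = b then 1 else 0) + t * ((if a = b then 1 else 0) + Dbig N M Z W a b))
      = four_block_mat ?R1 ?R2 (0\<^sub>m (N - M) M) ?R4"
  proof (rule eq_matI)
    fix i j assume i: "i < dim_row (four_block_mat ?R1 ?R2 (0\<^sub>m (N - M) M) ?R4)"
      and j: "j < dim_col (four_block_mat ?R1 ?R2 (0\<^sub>m (N - M) M) ?R4)"
    then have i': "i < N" and j': "j < N" using MN by auto
    show "mat N N (\<lambda>(a,b). (if a = b then 1 else 0) + t * ((if a = b then 1 else 0) + Dbig N M Z W a b)) $$ (i, j)
        = four_block_mat ?R1 ?R2 (0\<^sub>m (N - M) M) ?R4 $$ (i, j)"
      using i j i' j' MN by (auto simp: Dbig_def)
  qed (use MN in auto)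
  have "Determinant.det (four_block_mat ?R1 ?R2 (0\<^sub>m (N - M) M) ?R4) = Determinant.det ?R1 * Determinant.det ?R4"
    by (rule det_four_block_mat_lower_left_zero) auto
  moreover have "Determinant.det ?R4 = (\<Prod>e<N - M. 1 + t * (1 + 2 * real e))"
  proof -
    have ut: "upper_triangular ?R4" unfolding upper_triangular_def by (auto simp: Tm_def)
    have "Determinant.det ?R4 = prod_list (diag_mat ?R4)" by (rule det_upper_triangular[OF ut]) auto
    also have "\<dots> = (\<Prod>e = 0..<N - M. ?R4 $$ (e, e))" by (simp add: prod_list_diag_prod)
    also have "\<dots> = (\<Prod>e<N - M. 1 + t * (1 + 2 * real e))"
      by (simp add: lessThan_atLeast0 Tm_def)
    finally show ?thesis .
  qed
  ultimately show ?thesis using eq by simp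
qed


lemma detW_nz: "Determinant.det (mat N N (\<lambda>(i,j). Wm M Z W i j)) \<noteq> 0"
proof
  let ?A = "mat N N (\<lambda>(i,j). Wm M Z W i j)"
  assume "Determinant.det ?A = 0"
  then obtain v where v: "v \<in> carrier_vec N" "v \<noteq> 0\<^sub>v N" "?A *\<^sub>v v = 0\<^sub>v N"
    using det_0_iff_vec_prod_zero_field[of ?A N] by auto
  have dv: "dim_vec v = N" using v(1) by simp
  have eqs: "\<And>j. j < N \<Longrightarrow> (\<Sum>c<N. Wm M Z W j c * vec_index v c) = 0"
  proof -
    fix j assume j: "j < N"
    have "(?A *\<^sub>v v) $ j = 0" using v(3) j by simp
    then show "(\<Sum>c<N. Wm M Z W j c * vec_index v c) = 0"
      using j dv by (simp add: scalar_prod_def lessThan_atLeast0)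
  qed
  define Qp where "Qp = (\<Prod>m<M. [:W m, 1:])"
  define P where "P = (\<Sum>e<N - M. monom (vec_index v (M + e)) e)"
  define R where "R = (\<Sum>c<M. Polynomial.smult (vec_index v c) (\<Prod>m\<in>{..<M} - {c}. [:W m, 1:])) + Qp * P"
  have polyQ: "poly Qp z = (\<Prod>m<M. z + W m)" for z unfolding Qp_def poly_prod by (simp add: add.commute)
  have polyR: "poly R z = (\<Sum>c<M. vec_index v c * (\<Prod>m\<in>{..<M} - {c}. z + W m)) + poly Qp z * (\<Sum>e<N - M. vec_index v (M + e) * z ^ e)" for z
    unfolding R_def P_def polyQ[symmetric] by (simp add: poly_sum poly_prod poly_monom add.commute)
  have Npos: "N > 0"
  proof (rule ccontr)
    assume "\<not> N > 0" then have "N = 0" by simp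
    then show False using v(1,2) by auto
  qed
  have root: "poly R (Z j) = 0" if j: "j < N" for j
  proof -
    have zpos: "Z j + W m > 0" if "m < M" for m using Zpos[OF j] Wpos[OF that] by simp
    have prodrm: "(\<Prod>m\<in>{..<M} - {c}. Z j + W m) = poly Qp (Z j) / (Z j + W c)" if c: "c < M" for c
    proof -
      have "poly Qp (Z j) = (Z j + W c) * (\<Prod>m\<in>{..<M} - {c}. Z j + W m)"
        unfolding polyQ using c by (simp add: prod.remove[of "{..<M}" c])
      then show ?thesis using zpos[OF c] by simp
    qed
    have s1: "(\<Sum>c<M. vec_index v c * (\<Prod>m\<in>{..<M} - {c}. Z j + W m)) = (\<Sum>c<M. poly Qp (Z j) * (1 / (Z j + W c) * vec_index v c))"
      by (intro sum.cong refl) (simp add: prodrm)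
    have s2: "(\<Sum>c<N. Wm M Z W j c * vec_index v c) = (\<Sum>c<M. 1 / (Z j + W c) * vec_index v c) + (\<Sum>e<N - M. Z j ^ e * vec_index v (M + e))"
      unfolding sum_split_MN[OF MN] by (simp add: Wm_def)
    have "poly R (Z j) = poly Qp (Z j) * (\<Sum>c<N. Wm M Z W j c * vec_index v c)"
      unfolding polyR s1 s2 distrib_left sum_distrib_left[symmetric] by (simp add: mult.commute)
    then show ?thesis using eqs[OF j] by simp
  qed
  have degR: "degree R < N"
  proof -
    have d1: "degree (Polynomial.smult (vec_index v c) (\<Prod>m\<in>{..<M} - {c}. [:W m, 1:])) \<le> N - 1" if c: "c \<in> {..<M}" for c
    proof -
      have "degree (Polynomial.smult (vec_index v c) (\<Prod>m\<in>{..<M} - {c}. [:W m, 1:])) \<le> degree (\<Prod>m\<in>{..<M} - {c}. [:W m, 1:])"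
        by (rule degree_smult_le)
      also have "\<dots> \<le> sum (degree \<circ> (\<lambda>m. [:W m, 1:])) ({..<M} - {c})" by (rule degree_prod_sum_le) simp
      also have "\<dots> = card ({..<M} - {c})" by simp
      also have "\<dots> \<le> N - 1" using c MN by simp
      finally show ?thesis .
    qed
    have d2: "degree (Qp * P) \<le> N - 1"
    proof (cases "N - M = 0")
      case True
      then have "P = 0" unfolding P_def by simp
      then show ?thesis by simp
    next
      case False
      have "degree (Qp * P) \<le> degree Qp + degree P" by (rule degree_mult_le)
      moreover have "degree Qp \<le> M"
      proof -
        have "degree Qp \<le> sum (degree \<circ> (\<lambda>m. [:W m, 1:])) {..<M}" unfolding Qp_def by (rule degree_prod_sum_le) simp
        then show ?thesis by simp
      qed
      moreover have "degree P \<le> N - M - 1"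
        unfolding P_def by (rule degree_sum_le) (auto intro: order.trans[OF degree_monom_le])
      ultimately show ?thesis using False by linarith
    qed
    have "degree R \<le> N - 1"
      unfolding R_def by (intro degree_add_le degree_sum_le d1 d2) auto
    then show ?thesis using Npos by linarith
  qed
  have R0: "R = 0"
  proof (rule ccontr)
    assume "R \<noteq> 0"
    then have fin: "finite {x. poly R x = 0}" and cb: "card {x. poly R x = 0} \<le> degree R"
      using poly_roots_finite card_poly_roots_bound by auto
    have "Z ` {..<N} \<subseteq> {x. poly R x = 0}" using root by auto
    then have "card (Z ` {..<N}) \<le> card {x. poly R x = 0}" using fin by (rule card_mono[rotated])
    moreover have "card (Z ` {..<N}) = N" using Zinj by (simp add: card_image)
    ultimately show False using cb degR by linarith
  qed
  have vc: "vec_index v c = 0" if c: "c < M" for c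
  proof -
    have z: "poly R (- W c) = 0" using R0 by simp
    have Qz: "poly Qp (- W c) = 0" unfolding polyQ using c by (intro prod_zero) auto
    have others: "(\<Prod>m\<in>{..<M} - {c'}. - W c + W m) = 0" if "c' < M" "c' \<noteq> c" for c'
      using c that by (intro prod_zero) auto
    have "(\<Sum>c'<M. vec_index v c' * (\<Prod>m\<in>{..<M} - {c'}. - W c + W m)) = vec_index v c * (\<Prod>m\<in>{..<M} - {c}. - W c + W m)"
    proof -
      have "(\<Sum>c'<M. vec_index v c' * (\<Prod>m\<in>{..<M} - {c'}. - W c + W m))
          = vec_index v c * (\<Prod>m\<in>{..<M} - {c}. - W c + W m) + (\<Sum>c'\<in>{..<M} - {c}. vec_index v c' * (\<Prod>m\<in>{..<M} - {c'}. - W c + W m))"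
        by (rule sum.remove) (use c in auto)
      moreover have "(\<Sum>c'\<in>{..<M} - {c}. vec_index v c' * (\<Prod>m\<in>{..<M} - {c'}. - W c + W m)) = 0"
      proof (rule sum.neutral, rule ballI)
        fix c' assume "c' \<in> {..<M} - {c}"
        then have "(\<Prod>m\<in>{..<M} - {c'}. - W c + W m) = 0" using others by auto
        then show "vec_index v c' * (\<Prod>m\<in>{..<M} - {c'}. - W c + W m) = 0" by simp
      qed
      ultimately show ?thesis by simp
    qed
    then have "vec_index v c * (\<Prod>m\<in>{..<M} - {c}. - W c + W m) = 0" using z unfolding polyR Qz by simp
    moreover have "(\<Prod>m\<in>{..<M} - {c}. - W c + W m) \<noteq> 0"
    proof -
      have "- W c + W m \<noteq> 0" if "m \<in> {..<M} - {c}" for m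
        using that c Winj unfolding inj_on_def by auto
      then show ?thesis by (simp add: prod_zero_iff)
    qed
    ultimately show ?thesis by simp
  qed
  have P0: "P = 0"
  proof (rule poly_pos_roots_zero)
    fix z :: real assume z: "z > 0"
    have "poly R z = poly Qp z * poly P z"
      unfolding R_def using vc by (simp add: poly_sum)
    moreover have "poly Qp z > 0" unfolding polyQ using z Wpos by (intro prod_pos) (auto intro: add_pos_pos)
    ultimately show "poly P z = 0" using R0 by simp
  qed
  have vM: "vec_index v (M + e) = 0" if e: "e < N - M" for e
    using coeff_sum_monom_lt[OF e, of "\<lambda>e. vec_index v (M + e)"] P0 unfolding P_def by simp
  have "v = 0\<^sub>v N"
  proof (rule eq_vecI)
    fix i assume "i < dim_vec (0\<^sub>v N)"
    then have i: "i < N" by simp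
    show "vec_index v i = 0\<^sub>v N $ i"
    proof (cases "i < M")
      case True then show ?thesis using vc i by simp
    next
      case False
      then have "i = M + (i - M)" "i - M < N - M" using i by auto
      then show ?thesis using vM[of "i - M"] i by simp
    qed
  qed (use dv in simp)
  then show False using v(2) by simp
qed

theorem core_det:
  "Determinant.det (mat N N (\<lambda>(i,j). (if i = j then 1 else 0) + t * Agen N M (real (N - M)) Z W i j))
   = (\<Prod>e<N - M. 1 + t * (1 + 2 * real e))
     * Determinant.det (mat M M (\<lambda>(i,j). (if i = j then 1 else 0) + t * Agen M N (real (N - M)) (\<lambda>n. 1 / W n) (\<lambda>k. 1 / Z k) i j))"
proof -
  let ?L = "mat N N (\<lambda>(i,j). (if i = j then 1 else 0) + t * Agen N M (real (N - M)) Z W i j)"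
  let ?W = "mat N N (\<lambda>(i,j). Wm M Z W i j)"
  let ?R = "mat N N (\<lambda>(a,b). (if a = b then 1 else 0) + t * ((if a = b then 1 else 0) + Dbig N M Z W a b))"
  have e1: "Determinant.det (?L * ?W) = Determinant.det ?L * Determinant.det ?W" by (rule det_mult) auto
  have e2: "Determinant.det (?W * ?R) = Determinant.det ?W * Determinant.det ?R" by (rule det_mult) auto
  have "Determinant.det ?L * Determinant.det ?W = Determinant.det ?W * Determinant.det ?R"
    unfolding e1[symmetric] e2[symmetric] mat_relation[of t] ..
  then have "Determinant.det ?L = Determinant.det ?R" using detW_nz by (simp add: mult.commute)
  then show ?thesis unfolding det_block det_R1 by simp
qed

end

definition Agen1 :: "nat \<Rightarrow> nat \<Rightarrow> real \<Rightarrow> (nat \<Rightarrow> real) \<Rightarrow> (nat \<Rightarrow> real) \<Rightarrow> nat \<Rightarrow> nat \<Rightarrow> real" where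
  "Agen1 n m c Z W i j = (if i = j then - (\<Sum>k\<in>{1..n} - {i}. (Z i + Z k) / (Z i - Z k)) + c
       + (\<Sum>q\<in>{1..m}. (Z i - W q) / (Z i + W q)) else 2 * Z j / (Z i - Z j))"

definition Sn :: "nat \<Rightarrow> nat \<Rightarrow> nat" where
  "Sn l j = (\<Sum>A\<in>{A. A \<subseteq> {1..l} \<and> card A = j}. \<Prod>a\<in>A. 2 * a - 1)"

lemma sum_shift1: "(\<Sum>k\<in>{1..n}. f k) = (\<Sum>k<n. f (Suc k))"
proof -
  have "{1..n} = Suc ` {..<n}" by (simp add: image_Suc_lessThan)
  then show ?thesis by (simp add: sum.reindex)
qed

lemma sum_shift1_minus: "(\<Sum>k\<in>{1..n} - {Suc i}. f k) = (\<Sum>k\<in>{..<n} - {i}. f (Suc k))"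
proof -
  have "{1..n} - {Suc i} = Suc ` ({..<n} - {i})"
    by (simp add: image_set_diff image_Suc_lessThan)
  then show ?thesis by (simp add: sum.reindex)
qed

lemma Agen1_shift:
  "Agen1 n m c Z W (Suc i) (Suc j) = Agen n m c (\<lambda>k. Z (Suc k)) (\<lambda>k. W (Suc k)) i j"
  unfolding Agen1_def Agen_def sum_shift1 sum_shift1_minus by simp

lemma esym_big: "m > n \<Longrightarrow> esym n m A = 0"
proof -
  assume mn: "m > n"
  have e: "{I. I \<subseteq> {1..n} \<and> card I = m} = {}"
  proof (rule ccontr)
    assume "{I. I \<subseteq> {1..n} \<and> card I = m} \<noteq> {}"
    then obtain I where "I \<subseteq> {1..n}" "card I = m" by blast
    then have "m \<le> n" using card_mono[of "{1..n}" I] by simp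
    then show False using mn by simp
  qed
  show ?thesis unfolding esym_def e by simp
qed

lemma prod_odd_expand:
  "(\<Prod>e<l. 1 + t * (1 + 2 * real e)) = (\<Sum>i\<le>l. t ^ i * real (Sn l i))"
proof -
  have "(\<Prod>e<l. 1 + t * (1 + 2 * real e)) = (\<Prod>a\<in>{1..l}. t * real (2 * a - 1) + 1)"
  proof -
    have "{1..l} = Suc ` {..<l}" by (simp add: image_Suc_lessThan)
    then have "(\<Prod>a\<in>{1..l}. t * real (2 * a - 1) + 1) = (\<Prod>e<l. t * real (2 * Suc e - 1) + 1)"
      by (simp add: prod.reindex)
    also have "\<dots> = (\<Prod>e<l. 1 + t * (1 + 2 * real e))"
      by (intro prod.cong refl) (simp add: of_nat_diff algebra_simps)
    finally show ?thesis by simp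
  qed
  also have "\<dots> = (\<Sum>X\<in>Pow {1..l}. (\<Prod>a\<in>X. t * real (2 * a - 1)) * (\<Prod>a\<in>{1..l} - X. 1))"
    by (rule prod_add) simp
  also have "\<dots> = (\<Sum>X\<in>Pow {1..l}. t ^ card X * (\<Prod>a\<in>X. real (2 * a - 1)))"
    by (intro sum.cong refl) (simp add: prod.distrib)
  also have "\<dots> = (\<Sum>i\<le>l. \<Sum>X\<in>{X\<in>Pow {1..l}. card X = i}. t ^ card X * (\<Prod>a\<in>X. real (2 * a - 1)))"
    by (rule sum.group[symmetric]) (auto simp: card_mono[of "{1..l}", simplified] intro: card_mono)
  also have "\<dots> = (\<Sum>i\<le>l. t ^ i * real (Sn l i))"
    unfolding Sn_def of_nat_sum of_nat_prod sum_distrib_left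
    by (intro sum.cong refl) auto
  finally show ?thesis .
qed

lemma coeff_sum_monom_le:
  fixes f :: "nat \<Rightarrow> 'a::comm_ring_1"
  shows "coeff (\<Sum>e'\<le>L. monom (f e') e') e = (if e \<le> L then f e else 0)"
proof -
  have "coeff (\<Sum>e'\<le>L. monom (f e') e') e = (\<Sum>e'\<le>L. if e' = e then f e' else 0)"
    unfolding coeff_sum coeff_monom by (intro sum.cong refl)
  also have "\<dots> = (if e \<le> L then f e else 0)" by (simp add: sum.delta')
  finally show ?thesis .
qed

lemma poly_sum_monom_le: fixes f :: "nat \<Rightarrow> real" shows "poly (\<Sum>e'\<le>L. monom (f e') e') t = (\<Sum>e'\<le>L. t ^ e' * f e')"
  by (simp add: poly_sum poly_monom mult.commute)

theorem core_esym:
  fixes X Y :: "nat \<Rightarrow> real" and N M k :: nat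
  assumes Xpos: "\<And>i. i \<in> {1..N} \<Longrightarrow> X i > 0" and Xinj: "inj_on X {1..N}"
    and Ypos: "\<And>i. i \<in> {1..M} \<Longrightarrow> Y i > 0" and Yinj: "inj_on Y {1..M}"
    and MN: "M \<le> N"
  shows "esym N k (Agen1 N M (real (N - M)) X Y)
       = (\<Sum>j=0..min k (N - M). real (Sn (N - M) j) * esym M (k - j) (Agen1 M N (real (N - M)) (\<lambda>n. 1 / Y n) (\<lambda>m. 1 / X m)))"
proof -
  define Z where "Z k = X (Suc k)" for k
  define W where "W k = Y (Suc k)" for k
  define l where "l = N - M"
  define ex where "ex k = esym N k (Agen1 N M (real (N - M)) X Y)" for k
  define ey where "ey k = esym M k (Agen1 M N (real (N - M)) (\<lambda>n. 1 / Y n) (\<lambda>m. 1 / X m))" for k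
  have Zpos: "\<And>i. i < N \<Longrightarrow> Z i > 0" unfolding Z_def using Xpos by simp
  have Wpos: "\<And>i. i < M \<Longrightarrow> W i > 0" unfolding W_def using Ypos by simp
  have Zinj: "inj_on Z {..<N}"
  proof (rule inj_onI)
    fix a b assume "a \<in> {..<N}" "b \<in> {..<N}" "Z a = Z b"
    then have "Suc a = Suc b" using inj_onD[OF Xinj, of "Suc a" "Suc b"] unfolding Z_def by simp
    then show "a = b" by simp
  qed
  have Winj: "inj_on W {..<M}"
  proof (rule inj_onI)
    fix a b assume "a \<in> {..<M}" "b \<in> {..<M}" "W a = W b"
    then have "Suc a = Suc b" using inj_onD[OF Yinj, of "Suc a" "Suc b"] unfolding W_def by simp
    then show "a = b" by simp
  qed
  have ident: "(\<Sum>k\<le>N. t ^ k * ex k) = (\<Sum>i\<le>l. t ^ i * real (Sn l i)) * (\<Sum>m\<le>M. t ^ m * ey m)" for t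
  proof -
    have "(\<Sum>k\<le>N. t ^ k * ex k) = Determinant.det (mat N N (\<lambda>(i,j). (if i = j then 1 else 0) + t * Agen1 N M (real (N - M)) X Y (Suc i) (Suc j)))"
      unfolding ex_def by (rule det_expand[symmetric])
    also have "\<dots> = Determinant.det (mat N N (\<lambda>(i,j). (if i = j then 1 else 0) + t * Agen N M (real (N - M)) Z W i j))"
      unfolding Agen1_shift Z_def W_def ..
    also have "\<dots> = (\<Prod>e<N - M. 1 + t * (1 + 2 * real e))
     * Determinant.det (mat M M (\<lambda>(i,j). (if i = j then 1 else 0) + t * Agen M N (real (N - M)) (\<lambda>n. 1 / W n) (\<lambda>k. 1 / Z k) i j))"
      by (rule core_det[OF Zpos Zinj Wpos Winj MN])
    also have "Determinant.det (mat M M (\<lambda>(i,j). (if i = j then 1 else 0) + t * Agen M N (real (N - M)) (\<lambda>n. 1 / W n) (\<lambda>k. 1 / Z k) i j))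
        = Determinant.det (mat M M (\<lambda>(i,j). (if i = j then 1 else 0) + t * Agen1 M N (real (N - M)) (\<lambda>n. 1 / Y n) (\<lambda>m. 1 / X m) (Suc i) (Suc j)))"
      unfolding Agen1_shift Z_def W_def ..
    also have "\<dots> = (\<Sum>m\<le>M. t ^ m * ey m)" unfolding ey_def by (rule det_expand)
    finally show ?thesis unfolding prod_odd_expand l_def .
  qed
  define px where "px = (\<Sum>k\<le>N. monom (ex k) k)"
  define ps where "ps = (\<Sum>i\<le>l. monom (real (Sn l i)) i)"
  define py where "py = (\<Sum>m\<le>M. monom (ey m) m)"
  have "poly px = poly (ps * py)"
    unfolding px_def ps_def py_def poly_mult poly_sum_monom_le using ident by (intro ext) simp
  then have pe: "px = ps * py" by (simp add: poly_eq_poly_eq_iff)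
  have cy: "coeff py m = ey m" for m
    unfolding py_def coeff_sum_monom_le by (auto simp: ey_def esym_big)
  show ?thesis
  proof (cases "k \<le> N")
    case True
    have "ex k = coeff px k" unfolding px_def coeff_sum_monom_le using True by simp
    also have "\<dots> = (\<Sum>i\<le>k. coeff ps i * coeff py (k - i))" unfolding pe coeff_mult ..
    also have "\<dots> = (\<Sum>i\<le>k. (if i \<le> l then real (Sn l i) else 0) * ey (k - i))"
      unfolding ps_def coeff_sum_monom_le cy ..
    also have "\<dots> = (\<Sum>i\<in>{0..min k l}. real (Sn l i) * ey (k - i))"
      by (rule sum.mono_neutral_cong_right) auto
    finally show ?thesis unfolding ex_def ey_def l_def .
  next
    case False
    then have "ex k = 0" unfolding ex_def by (simp add: esym_big)
    moreover have "(\<Sum>j=0..min k (N - M). real (Sn (N - M) j) * ey (k - j)) = 0"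
    proof (rule sum.neutral, rule ballI)
      fix j assume "j \<in> {0..min k (N - M)}"
      then have "k - j > M" using False MN by auto
      then show "real (Sn (N - M) j) * ey (k - j) = 0" unfolding ey_def by (simp add: esym_big)
    qed
    ultimately show ?thesis unfolding ex_def ey_def by simp
  qed
qed

lemma mpartial_sep:
  fixes S :: "nat set" and \<phi> \<phi>' :: "nat \<Rightarrow> real \<Rightarrow> real" and C :: real
  assumes fin: "finite S" and der: "\<And>i t. i \<in> S \<Longrightarrow> (\<phi> i has_real_derivative \<phi>' i t) (at t)"
  shows "distinct ms \<Longrightarrow> set ms \<subseteq> S \<Longrightarrow>
    mpartial (\<lambda>v. complex_of_real (exp (C + (\<Sum>i\<in>S. \<phi> i (v i))))) ms
    = (\<lambda>v. complex_of_real (exp (C + (\<Sum>i\<in>S. \<phi> i (v i)))) * (\<Prod>m\<in>set ms. complex_of_real (\<phi>' m (v m))))"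
proof (induction ms)
  case Nil
  then show ?case by simp
next
  case (Cons m ms)
  have m: "m \<in> S" "m \<notin> set ms" and ms: "distinct ms" "set ms \<subseteq> S" using Cons.prems by auto
  have IH: "mpartial (\<lambda>v. complex_of_real (exp (C + (\<Sum>i\<in>S. \<phi> i (v i))))) ms
    = (\<lambda>v. complex_of_real (exp (C + (\<Sum>i\<in>S. \<phi> i (v i)))) * (\<Prod>m\<in>set ms. complex_of_real (\<phi>' m (v m))))"
    using Cons.IH ms by simp
  show ?case
  proof (rule ext)
    fix v :: "nat \<Rightarrow> real"
    define P where "P = (\<Prod>m\<in>set ms. complex_of_real (\<phi>' m (v m)))"
    define C2 where "C2 = C + (\<Sum>i\<in>S - {m}. \<phi> i (v i))"
    have sumt: "(\<Sum>i\<in>S. \<phi> i ((v(m := t)) i)) = \<phi> m t + (\<Sum>i\<in>S - {m}. \<phi> i (v i))" for t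
    proof -
      have "(\<Sum>i\<in>S. \<phi> i ((v(m := t)) i)) = \<phi> m ((v(m := t)) m) + (\<Sum>i\<in>S - {m}. \<phi> i ((v(m := t)) i))"
        by (rule sum.remove[OF fin m(1)])
      also have "(\<Sum>i\<in>S - {m}. \<phi> i ((v(m := t)) i)) = (\<Sum>i\<in>S - {m}. \<phi> i (v i))"
        by (intro sum.cong refl) auto
      finally show ?thesis by simp
    qed
    have Pt: "(\<Prod>j\<in>set ms. complex_of_real (\<phi>' j ((v(m := t)) j))) = P" for t
      unfolding P_def using m(2) by (intro prod.cong refl) auto
    have fun_eq: "(\<lambda>t. complex_of_real (exp (C + (\<Sum>i\<in>S. \<phi> i ((v(m := t)) i)))) * (\<Prod>j\<in>set ms. complex_of_real (\<phi>' j ((v(m := t)) j))))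
        = (\<lambda>t. complex_of_real (exp (C2 + \<phi> m t)) * P)"
      unfolding sumt Pt C2_def by (simp add: algebra_simps)
    have d: "((\<lambda>t. exp (C2 + \<phi> m t)) has_real_derivative exp (C2 + \<phi> m (v m)) * \<phi>' m (v m)) (at (v m))"
      using der[OF m(1), of "v m"] by (auto intro!: derivative_eq_intros)
    have dv: "((\<lambda>t. complex_of_real (exp (C2 + \<phi> m t)) * P) has_vector_derivative
        complex_of_real (exp (C2 + \<phi> m (v m)) * \<phi>' m (v m)) * P) (at (v m))"
      by (rule has_vector_derivative_mult_left[OF has_vector_derivative_of_real[OF d]])
    have ev: "exp (C2 + \<phi> m (v m)) = exp (C + (\<Sum>i\<in>S. \<phi> i (v i)))"
    proof -
      have "(\<Sum>i\<in>S. \<phi> i (v i)) = \<phi> m (v m) + (\<Sum>i\<in>S - {m}. \<phi> i (v i))" by (rule sum.remove[OF fin m(1)])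
      then show ?thesis unfolding C2_def by (simp add: algebra_simps)
    qed
    have "mpartial (\<lambda>v. complex_of_real (exp (C + (\<Sum>i\<in>S. \<phi> i (v i))))) (m # ms) v
        = vector_derivative (\<lambda>t. complex_of_real (exp (C2 + \<phi> m t)) * P) (at (v m))"
      unfolding mpartial.simps IH partial_at_def fun_eq ..
    also have "\<dots> = complex_of_real (exp (C2 + \<phi> m (v m)) * \<phi>' m (v m)) * P"
      by (rule vector_derivative_at[OF dv])
    also have "\<dots> = complex_of_real (exp (C + (\<Sum>i\<in>S. \<phi> i (v i)))) * (\<Prod>m\<in>set (m # ms). complex_of_real (\<phi>' m (v m)))"
      unfolding ev P_def using m(2) by simp
    finally show "mpartial (\<lambda>v. complex_of_real (exp (C + (\<Sum>i\<in>S. \<phi> i (v i))))) (m # ms) v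
        = complex_of_real (exp (C + (\<Sum>i\<in>S. \<phi> i (v i)))) * (\<Prod>m\<in>set (m # ms). complex_of_real (\<phi>' m (v m)))" .
  qed
qed


definition phix :: "real \<Rightarrow> real \<Rightarrow> real \<Rightarrow> nat \<Rightarrow> (nat \<Rightarrow> real) \<Rightarrow> nat \<Rightarrow> nat \<Rightarrow> real \<Rightarrow> real" where
  "phix hbar mu g l y M i t = - (mu * g * real l / (2 * hbar)) * t - (g / hbar) * (\<Sum>n\<in>{1..M}. ln (2 * cosh (mu * (t - y n) / 2)))"

definition phix' :: "real \<Rightarrow> real \<Rightarrow> real \<Rightarrow> nat \<Rightarrow> (nat \<Rightarrow> real) \<Rightarrow> nat \<Rightarrow> nat \<Rightarrow> real \<Rightarrow> real" where
  "phix' hbar mu g l y M i t = - (mu * g * real l / (2 * hbar)) - (g / hbar) * (\<Sum>n\<in>{1..M}. mu / 2 * (sinh (mu * (t - y n) / 2) / cosh (mu * (t - y n) / 2)))"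

definition phiy :: "real \<Rightarrow> real \<Rightarrow> real \<Rightarrow> nat \<Rightarrow> (nat \<Rightarrow> real) \<Rightarrow> nat \<Rightarrow> nat \<Rightarrow> real \<Rightarrow> real" where
  "phiy hbar mu g l x N i t = (mu * g * real l / (2 * hbar)) * t - (g / hbar) * (\<Sum>m\<in>{1..N}. ln (2 * cosh (mu * (x m - t) / 2)))"

definition phiy' :: "real \<Rightarrow> real \<Rightarrow> real \<Rightarrow> nat \<Rightarrow> (nat \<Rightarrow> real) \<Rightarrow> nat \<Rightarrow> nat \<Rightarrow> real \<Rightarrow> real" where
  "phiy' hbar mu g l x N i t = (mu * g * real l / (2 * hbar)) + (g / hbar) * (\<Sum>m\<in>{1..N}. mu / 2 * (sinh (mu * (x m - t) / 2) / cosh (mu * (x m - t) / 2)))"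

lemma d_lncosh1:
  "((\<lambda>t. ln (2 * cosh (mu * (t - c) / 2))) has_real_derivative mu / 2 * (sinh (mu * (t - c) / 2) / cosh (mu * (t - c) / 2))) (at t)"
proof -
  have pos: "0 < 2 * cosh (mu * (t - c) / 2)" by simp
  have dg: "((\<lambda>t. 2 * cosh (mu * (t - c) / 2)) has_real_derivative 2 * (sinh (mu * (t - c) / 2) * (mu / 2))) (at t)"
    by (auto intro!: derivative_eq_intros simp: field_simps)
  have "((\<lambda>t. ln (2 * cosh (mu * (t - c) / 2))) has_real_derivative 1 / (2 * cosh (mu * (t - c) / 2)) * (2 * (sinh (mu * (t - c) / 2) * (mu / 2)))) (at t)"
    by (rule DERIV_chain2[OF DERIV_ln_divide[OF pos] dg])
  then show ?thesis by (rule DERIV_cong) simp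
qed

lemma d_lncosh2:
  "((\<lambda>t. ln (2 * cosh (mu * (c - t) / 2))) has_real_derivative - (mu / 2 * (sinh (mu * (c - t) / 2) / cosh (mu * (c - t) / 2)))) (at t)"
proof -
  have pos: "0 < 2 * cosh (mu * (c - t) / 2)" by simp
  have dg: "((\<lambda>t. 2 * cosh (mu * (c - t) / 2)) has_real_derivative 2 * (sinh (mu * (c - t) / 2) * (- mu / 2))) (at t)"
    by (auto intro!: derivative_eq_intros simp: field_simps)
  have "((\<lambda>t. ln (2 * cosh (mu * (c - t) / 2))) has_real_derivative 1 / (2 * cosh (mu * (c - t) / 2)) * (2 * (sinh (mu * (c - t) / 2) * (- mu / 2)))) (at t)"
    by (rule DERIV_chain2[OF DERIV_ln_divide[OF pos] dg])
  then show ?thesis by (rule DERIV_cong) simp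
qed

lemma d_phix: "(phix hbar mu g l y M i has_real_derivative phix' hbar mu g l y M i t) (at t)"
proof -
  have "((\<lambda>t. \<Sum>n\<in>{1..M}. ln (2 * cosh (mu * (t - y n) / 2))) has_real_derivative
      (\<Sum>n\<in>{1..M}. mu / 2 * (sinh (mu * (t - y n) / 2) / cosh (mu * (t - y n) / 2)))) (at t)"
    by (rule DERIV_sum) (rule d_lncosh1)
  then have "((\<lambda>t. - (mu * g * real l / (2 * hbar)) * t - (g / hbar) * (\<Sum>n\<in>{1..M}. ln (2 * cosh (mu * (t - y n) / 2))))
      has_real_derivative - (mu * g * real l / (2 * hbar)) * 1 - (g / hbar) * (\<Sum>n\<in>{1..M}. mu / 2 * (sinh (mu * (t - y n) / 2) / cosh (mu * (t - y n) / 2)))) (at t)"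
    by (intro DERIV_diff DERIV_cmult DERIV_ident)
  then show ?thesis unfolding phix_def[abs_def] phix'_def by simp
qed

lemma d_phiy: "(phiy hbar mu g l x N i has_real_derivative phiy' hbar mu g l x N i t) (at t)"
proof -
  have "((\<lambda>t. \<Sum>m\<in>{1..N}. ln (2 * cosh (mu * (x m - t) / 2))) has_real_derivative
      (\<Sum>m\<in>{1..N}. - (mu / 2 * (sinh (mu * (x m - t) / 2) / cosh (mu * (x m - t) / 2))))) (at t)"
    by (rule DERIV_sum) (rule d_lncosh2)
  then have "((\<lambda>t. (mu * g * real l / (2 * hbar)) * t - (g / hbar) * (\<Sum>m\<in>{1..N}. ln (2 * cosh (mu * (x m - t) / 2))))
      has_real_derivative (mu * g * real l / (2 * hbar)) * 1 - (g / hbar) * (\<Sum>m\<in>{1..N}. - (mu / 2 * (sinh (mu * (x m - t) / 2) / cosh (mu * (x m - t) / 2))))) (at t)"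
    by (intro DERIV_diff DERIV_cmult DERIV_ident)
  then show ?thesis unfolding phiy_def[abs_def] phiy'_def by (simp add: sum_negf)
qed

lemma powr_cosh: "(2 * cosh (u::real)) powr r = exp (r * ln (2 * cosh u))"
  by (simp add: powr_def)

lemma kernel_x:
  "kernelK hbar mu g N l x' y = complex_of_real (exp ((mu * g * real l / (2 * hbar)) * (\<Sum>n=1..N-l. y n)
      + (\<Sum>i\<in>{1..N}. phix hbar mu g l y (N - l) i (x' i))))"
proof -
  define a where "a = mu * g * real l / (2 * hbar)"
  have "(\<Prod>m=1..N. \<Prod>n=1..N-l. (2 * cosh (mu * (x' m - y n) / 2)) powr (g / hbar))
      = exp (\<Sum>m=1..N. \<Sum>n=1..N-l. g / hbar * ln (2 * cosh (mu * (x' m - y n) / 2)))"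
    unfolding powr_cosh by (simp add: exp_sum)
  then have "kernelK hbar mu g N l x' y = complex_of_real (exp (a * ((\<Sum>n=1..N-l. y n) - (\<Sum>m=1..N. x' m))
      - (\<Sum>m=1..N. \<Sum>n=1..N-l. g / hbar * ln (2 * cosh (mu * (x' m - y n) / 2)))))"
    unfolding kernelK_def a_def by (simp add: exp_diff)
  also have "a * ((\<Sum>n=1..N-l. y n) - (\<Sum>m=1..N. x' m)) - (\<Sum>m=1..N. \<Sum>n=1..N-l. g / hbar * ln (2 * cosh (mu * (x' m - y n) / 2)))
      = a * (\<Sum>n=1..N-l. y n) + (\<Sum>i\<in>{1..N}. phix hbar mu g l y (N - l) i (x' i))"
    unfolding phix_def a_def[symmetric] by (simp add: sum_subtractf sum_distrib_left right_diff_distrib sum_negf)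
  finally show ?thesis unfolding a_def .
qed

lemma kernel_y:
  "kernelK hbar mu g N l x y' = complex_of_real (exp (- ((mu * g * real l / (2 * hbar)) * (\<Sum>m=1..N. x m))
      + (\<Sum>i\<in>{1..N-l}. phiy hbar mu g l x N i (y' i))))"
proof -
  define a where "a = mu * g * real l / (2 * hbar)"
  have "(\<Prod>m=1..N. \<Prod>n=1..N-l. (2 * cosh (mu * (x m - y' n) / 2)) powr (g / hbar))
      = exp (\<Sum>m=1..N. \<Sum>n=1..N-l. g / hbar * ln (2 * cosh (mu * (x m - y' n) / 2)))"
    unfolding powr_cosh by (simp add: exp_sum)
  then have "kernelK hbar mu g N l x y' = complex_of_real (exp (a * ((\<Sum>n=1..N-l. y' n) - (\<Sum>m=1..N. x m))
      - (\<Sum>m=1..N. \<Sum>n=1..N-l. g / hbar * ln (2 * cosh (mu * (x m - y' n) / 2)))))"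
    unfolding kernelK_def a_def by (simp add: exp_diff)
  also have "(\<Sum>m=1..N. \<Sum>n=1..N-l. g / hbar * ln (2 * cosh (mu * (x m - y' n) / 2)))
      = (\<Sum>n=1..N-l. \<Sum>m=1..N. g / hbar * ln (2 * cosh (mu * (x m - y' n) / 2)))"
    by (rule sum.swap)
  also have "a * ((\<Sum>n=1..N-l. y' n) - (\<Sum>m=1..N. x m)) - (\<Sum>n=1..N-l. \<Sum>m=1..N. g / hbar * ln (2 * cosh (mu * (x m - y' n) / 2)))
      = - (a * (\<Sum>m=1..N. x m)) + (\<Sum>i\<in>{1..N-l}. phiy hbar mu g l x N i (y' i))"
    unfolding phiy_def a_def[symmetric] by (simp add: sum_subtractf sum_distrib_left right_diff_distrib sum_negf)
  finally show ?thesis unfolding a_def .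
qed

lemma mpartial_kernel_x:
  assumes J: "J \<subseteq> {1..N}"
  shows "mpartial (\<lambda>x'. kernelK hbar mu g N l x' y) (sorted_list_of_set J) x
     = kernelK hbar mu g N l x y * (\<Prod>j\<in>J. complex_of_real (phix' hbar mu g l y (N - l) j (x j)))"
proof -
  have fJ: "finite J" using J finite_subset by auto
  have fe: "(\<lambda>x'. kernelK hbar mu g N l x' y) = (\<lambda>v. complex_of_real (exp ((mu * g * real l / (2 * hbar)) * (\<Sum>n=1..N-l. y n)
      + (\<Sum>i\<in>{1..N}. phix hbar mu g l y (N - l) i (v i)))))"
    by (rule ext) (rule kernel_x)
  show ?thesis unfolding fe kernel_x[where x'=x]
    using mpartial_sep[where S="{1..N}" and \<phi>="phix hbar mu g l y (N - l)" and \<phi>'="phix' hbar mu g l y (N - l)" and C="(mu * g * real l / (2 * hbar)) * (\<Sum>n=1..N-l. y n)" and ms="sorted_list_of_set J"]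
      d_phix J fJ by simp
qed

lemma mpartial_kernel_y:
  assumes J: "J \<subseteq> {1..N-l}"
  shows "mpartial (\<lambda>y'. kernelK hbar mu g N l x y') (sorted_list_of_set J) y
     = kernelK hbar mu g N l x y * (\<Prod>j\<in>J. complex_of_real (phiy' hbar mu g l x N j (y j)))"
proof -
  have fJ: "finite J" using J finite_subset by auto
  have fe: "(\<lambda>y'. kernelK hbar mu g N l x y') = (\<lambda>v. complex_of_real (exp (- ((mu * g * real l / (2 * hbar)) * (\<Sum>m=1..N. x m))
      + (\<Sum>i\<in>{1..N-l}. phiy hbar mu g l x N i (v i)))))"
    by (rule ext) (rule kernel_y)
  show ?thesis unfolding fe kernel_y[where y'=y]
    using mpartial_sep[where S="{1..N-l}" and \<phi>="phiy hbar mu g l x N" and \<phi>'="phiy' hbar mu g l x N" and C="- ((mu * g * real l / (2 * hbar)) * (\<Sum>m=1..N. x m))" and ms="sorted_list_of_set J"]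
      d_phiy J fJ by simp
qed

lemma prod_split_filter:
  fixes h :: "nat \<Rightarrow> 'a::comm_monoid_mult"
  assumes "finite I"
  shows "prod h I = prod h {i\<in>I. \<not> P i} * prod h {i\<in>I. P i}"
proof -
  have "I = {i\<in>I. \<not> P i} \<union> {i\<in>I. P i}" by auto
  then have "prod h I = prod h ({i\<in>I. \<not> P i} \<union> {i\<in>I. P i})" by simp
  also have "\<dots> = prod h {i\<in>I. \<not> P i} * prod h {i\<in>I. P i}"
    by (rule prod.union_disjoint) (use assms in auto)
  finally show ?thesis .
qed

lemma sigma_esym:
  fixes f :: "(nat \<Rightarrow> real) \<Rightarrow> complex" and D :: "nat \<Rightarrow> complex"
  assumes md: "\<And>J. J \<subseteq> {1..n} \<Longrightarrow> mpartial f (sorted_list_of_set J) x = f x * (\<Prod>j\<in>J. D j)"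
  shows "Sigma_op hbar mu g n k s f x = f x * esym n k (\<lambda>i j. if i = j
      then zE mu g n (\<lambda>m. s * x m) i + (- \<i> * complex_of_real hbar * complex_of_real s) * D i
      else Lnr_offdiag mu g (\<lambda>m. s * x m) i j)"
proof -
  define c where "c = - \<i> * complex_of_real hbar * complex_of_real s"
  define xs where "xs = (\<lambda>m. s * x m)"
  define A where "A = (\<lambda>i j. if i = j then zE mu g n xs i + c * D i else Lnr_offdiag mu g xs i j)"
  have "Sigma_op hbar mu g n k s f x = (\<Sum>I\<in>{I. I \<subseteq> {1..n} \<and> card I = k}. f x * pm I A)"
    unfolding Sigma_op_def Let_def xs_def[symmetric] c_def[symmetric]
  proof (intro sum.cong refl)
    fix I assume "I \<in> {I. I \<subseteq> {1..n} \<and> card I = k}"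
    then have I: "I \<subseteq> {1..n}" by simp
    have fI: "finite I" using I finite_subset by auto
    show "(\<Sum>\<sigma>\<in>{\<sigma>. \<sigma> permutes I}. of_int (sign \<sigma>) * (\<Prod>j\<in>{j \<in> I. \<sigma> j \<noteq> j}. Lnr_offdiag mu g xs j (\<sigma> j)) *
          (\<Sum>J\<in>Pow {j \<in> I. \<sigma> j = j}. (\<Prod>j\<in>{j \<in> I. \<sigma> j = j} - J. zE mu g n xs j) * c ^ card J *
            mpartial f (sorted_list_of_set J) x)) = f x * pm I A"
      unfolding pm_def sum_distrib_left[where r="f x"]
    proof (rule sum.cong[OF refl])
      fix \<sigma> assume "\<sigma> \<in> {\<sigma>. \<sigma> permutes I}"
      define F where "F = {j \<in> I. \<sigma> j = j}"
      have fF: "finite F" unfolding F_def using fI by auto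
      have FI: "F \<subseteq> {1..n}" unfolding F_def using I by auto
      have inner: "(\<Sum>J\<in>Pow F. (\<Prod>j\<in>F - J. zE mu g n xs j) * c ^ card J * mpartial f (sorted_list_of_set J) x)
          = f x * (\<Prod>j\<in>F. c * D j + zE mu g n xs j)"
      proof -
        have "(\<Sum>J\<in>Pow F. (\<Prod>j\<in>F - J. zE mu g n xs j) * c ^ card J * mpartial f (sorted_list_of_set J) x)
            = (\<Sum>J\<in>Pow F. f x * ((\<Prod>j\<in>J. c * D j) * (\<Prod>j\<in>F - J. zE mu g n xs j)))"
        proof (intro sum.cong refl)
          fix J assume "J \<in> Pow F"
          then have J: "J \<subseteq> {1..n}" "finite J" using FI fF finite_subset by auto
          show "(\<Prod>j\<in>F - J. zE mu g n xs j) * c ^ card J * mpartial f (sorted_list_of_set J) x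
              = f x * ((\<Prod>j\<in>J. c * D j) * (\<Prod>j\<in>F - J. zE mu g n xs j))"
            unfolding md[OF J(1)] prod.distrib using J(2) by (simp add: mult_ac)
        qed
        also have "\<dots> = f x * (\<Prod>j\<in>F. c * D j + zE mu g n xs j)"
          unfolding sum_distrib_left[symmetric] by (simp add: prod_add[OF fF])
        finally show ?thesis .
      qed
      have "(\<Prod>i\<in>I. A i (\<sigma> i)) = (\<Prod>i\<in>{i\<in>I. \<not> \<sigma> i = i}. A i (\<sigma> i)) * (\<Prod>i\<in>{i\<in>I. \<sigma> i = i}. A i (\<sigma> i))"
        by (rule prod_split_filter[OF fI])
      also have "(\<Prod>i\<in>{i\<in>I. \<not> \<sigma> i = i}. A i (\<sigma> i)) = (\<Prod>j\<in>{j \<in> I. \<sigma> j \<noteq> j}. Lnr_offdiag mu g xs j (\<sigma> j))"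
        unfolding A_def by (intro prod.cong) auto
      also have "(\<Prod>i\<in>{i\<in>I. \<sigma> i = i}. A i (\<sigma> i)) = (\<Prod>j\<in>F. c * D j + zE mu g n xs j)"
        unfolding A_def F_def by (intro prod.cong) (auto simp: add.commute)
      finally have pA: "(\<Prod>i\<in>I. A i (\<sigma> i)) = (\<Prod>j\<in>{j \<in> I. \<sigma> j \<noteq> j}. Lnr_offdiag mu g xs j (\<sigma> j)) * (\<Prod>j\<in>F. c * D j + zE mu g n xs j)" .
      show "of_int (sign \<sigma>) * (\<Prod>j\<in>{j \<in> I. \<sigma> j \<noteq> j}. Lnr_offdiag mu g xs j (\<sigma> j)) *
          (\<Sum>J\<in>Pow {j \<in> I. \<sigma> j = j}. (\<Prod>j\<in>{j \<in> I. \<sigma> j = j} - J. zE mu g n xs j) * c ^ card J *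
            mpartial f (sorted_list_of_set J) x) = f x * (of_int (sign \<sigma>) * (\<Prod>i\<in>I. A i (\<sigma> i)))"
        unfolding F_def[symmetric] inner pA by (simp add: mult_ac)
    qed
  qed
  also have "\<dots> = f x * esym n k A" unfolding esym_def sum_distrib_left ..
  finally show ?thesis unfolding A_def c_def xs_def .
qed

definition Rgen :: "nat \<Rightarrow> nat \<Rightarrow> real \<Rightarrow> (nat \<Rightarrow> real) \<Rightarrow> (nat \<Rightarrow> real) \<Rightarrow> nat \<Rightarrow> nat \<Rightarrow> real" where
  "Rgen n m c p q i j = (if i = j then - (\<Sum>k\<in>{1..n} - {i}. cosh (p i - p k) / sinh (p i - p k)) + c
     + (\<Sum>r\<in>{1..m}. sinh (p i - q r) / cosh (p i - q r)) else 1 / sinh (p i - p j))"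

lemma sinh_exp: "sinh (a - b :: real) = (exp a / exp b - exp b / exp a) / 2"
proof -
  have "sinh (a - b) = (exp (a - b) - exp (b - a)) / 2" by (simp add: sinh_def minus_diff_eq)
  then show ?thesis by (simp only: exp_diff)
qed
lemma cosh_exp: "cosh (a - b :: real) = (exp a / exp b + exp b / exp a) / 2"
proof -
  have "cosh (a - b) = (exp (a - b) + exp (b - a)) / 2" by (simp add: cosh_def minus_diff_eq)
  then show ?thesis by (simp only: exp_diff)
qed
lemma exp2: "exp (2 * a :: real) = exp a * exp a"
proof -
  have "exp (2 * a) = exp (a + a)" by (simp only: mult_2)
  then show ?thesis by (simp only: exp_add)
qed

lemma f1: fixes A B :: real assumes "A \<noteq> 0" "B \<noteq> 0" shows "A / B + B / A = (A * A + B * B) / (A * B)"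
  using assms by (simp add: field_simps)
lemma f2: fixes A B :: real assumes "A \<noteq> 0" "B \<noteq> 0" shows "A / B - B / A = (A * A - B * B) / (A * B)"
  using assms by (simp add: field_simps)
lemma f3: fixes X Y c :: real assumes "c \<noteq> 0" shows "(X / c / 2) / (Y / c / 2) = X / Y"
  using assms by simp
lemma h1_gen: fixes A B :: real assumes "A > 0" "B > 0"
  shows "((A / B + B / A) / 2) / ((A / B - B / A) / 2) = (A * A + B * B) / (A * A - B * B)"
  using assms by (simp only: f1 f2 f3 mult_pos_pos less_irrefl) (simp add: f3)
lemma h2_gen: fixes A B :: real assumes "A > 0" "B > 0"
  shows "((A / B - B / A) / 2) / ((A / B + B / A) / 2) = (A * A - B * B) / (A * A + B * B)"
proof -
  have "A * B \<noteq> 0" using assms by simp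
  then show ?thesis using assms by (simp only: f1 f2 f3) simp
qed
lemma h3_gen: fixes A B :: real assumes "A > 0" "B > 0"
  shows "1 / ((A / B - B / A) / 2) = A * (2 * (B * B) / (A * A - B * B)) / B"
proof -
  have e: "A / B - B / A = (A * A - B * B) / (A * B)" by (rule f2) (use assms in auto)
  have r1: "1 / ((A * A - B * B) / (A * B) / 2) = 2 * (A * B) / (A * A - B * B)" by simp
  have r2: "A * (2 * (B * B) / (A * A - B * B)) / B = 2 * (A * B) / (A * A - B * B)"
    using assms by simp
  show ?thesis unfolding e r1 r2 ..
qed

lemma Rgen_conj:
  "Rgen n m c p q i j = exp (p i) * Agen1 n m c (\<lambda>k. exp (2 * p k)) (\<lambda>r. exp (2 * q r)) i j / exp (p j)"
proof (cases "i = j")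
  case True
  have s1: "(\<Sum>k\<in>{1..n} - {i}. cosh (p i - p k) / sinh (p i - p k))
      = (\<Sum>k\<in>{1..n} - {i}. (exp (2 * p i) + exp (2 * p k)) / (exp (2 * p i) - exp (2 * p k)))"
    unfolding sinh_exp cosh_exp exp2 by (intro sum.cong refl h1_gen) auto
  have s2: "(\<Sum>r\<in>{1..m}. sinh (p i - q r) / cosh (p i - q r))
      = (\<Sum>r\<in>{1..m}. (exp (2 * p i) - exp (2 * q r)) / (exp (2 * p i) + exp (2 * q r)))"
    unfolding sinh_exp cosh_exp exp2 by (intro sum.cong refl h2_gen) auto
  show ?thesis using True unfolding Rgen_def Agen1_def s1 s2 by simp
next
  case False
  have "1 / sinh (p i - p j) = exp (p i) * (2 * exp (2 * p j) / (exp (2 * p i) - exp (2 * p j))) / exp (p j)"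
    unfolding sinh_exp exp2 by (rule h3_gen) auto
  then show ?thesis using False unfolding Rgen_def Agen1_def by simp
qed

lemma pm_of_real: "pm I (\<lambda>i j. complex_of_real (R i j)) = complex_of_real (pm I R)"
  unfolding pm_def by (simp add: of_real_sum of_real_mult of_real_prod)

lemma esym_scale_ofreal:
  "esym n k (\<lambda>i j. a * complex_of_real (R i j)) = a ^ k * complex_of_real (esym n k R)"
proof -
  have "esym n k (\<lambda>i j. a * complex_of_real (R i j)) = (\<Sum>I\<in>{I. I \<subseteq> {1..n} \<and> card I = k}. a ^ k * complex_of_real (pm I R))"
    unfolding esym_def by (intro sum.cong refl) (simp add: pm_scale pm_of_real)
  also have "\<dots> = a ^ k * complex_of_real (esym n k R)"
    unfolding esym_def by (simp add: sum_distrib_left of_real_sum)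
  finally show ?thesis .
qed

lemma esym_conj:
  fixes A :: "nat \<Rightarrow> nat \<Rightarrow> real"
  assumes "\<And>i. d i \<noteq> 0"
  shows "esym n k (\<lambda>i j. d i * A i j / d j) = esym n k A"
  unfolding esym_def by (intro sum.cong refl pm_conj assms)

lemma entry_x:
  assumes hb: "hbar \<noteq> 0"
  shows "(\<lambda>i j. if i = j then zE mu g N (\<lambda>m. 1 * x m) i + (- \<i> * complex_of_real hbar * complex_of_real 1) * complex_of_real (phix' hbar mu g l y (N - l) i (x i))
      else Lnr_offdiag mu g (\<lambda>m. 1 * x m) i j)
    = (\<lambda>i j. (\<i> * complex_of_real mu * complex_of_real g / 2) * complex_of_real (Rgen N (N - l) (real l) (\<lambda>i. mu * x i / 2) (\<lambda>r. mu * y r / 2) i j))"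
proof (intro ext)
  fix i j :: nat
  show "(if i = j then zE mu g N (\<lambda>m. 1 * x m) i + (- \<i> * complex_of_real hbar * complex_of_real 1) * complex_of_real (phix' hbar mu g l y (N - l) i (x i))
      else Lnr_offdiag mu g (\<lambda>m. 1 * x m) i j)
    = (\<i> * complex_of_real mu * complex_of_real g / 2) * complex_of_real (Rgen N (N - l) (real l) (\<lambda>i. mu * x i / 2) (\<lambda>r. mu * y r / 2) i j)"
  proof (cases "i = j")
    case False
    have arg: "mu * (1 * x i - 1 * x j) / 2 = mu * x i / 2 - mu * x j / 2" by (simp add: field_simps)
    show ?thesis using False unfolding Lnr_offdiag_def Rgen_def arg by simp
  next
    case True
    define S1 where "S1 = (\<Sum>k\<in>{1..N} - {i}. cosh (mu * x i / 2 - mu * x k / 2) / sinh (mu * x i / 2 - mu * x k / 2))"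
    define S2 where "S2 = (\<Sum>r\<in>{1..N - l}. sinh (mu * x i / 2 - mu * y r / 2) / cosh (mu * x i / 2 - mu * y r / 2))"
    have z: "zE mu g N (\<lambda>m. 1 * x m) i = - (\<i> * complex_of_real mu * complex_of_real g / 2) * complex_of_real S1"
    proof -
      have a: "\<And>k. mu * (1 * x i - 1 * x k) / 2 = mu * x i / 2 - mu * x k / 2" by (simp add: field_simps)
      show ?thesis unfolding zE_def S1_def a of_real_sum ..
    qed
    have p: "phix' hbar mu g l y (N - l) i (x i) = - (mu * g * real l / (2 * hbar)) - g / hbar * (mu / 2 * S2)"
    proof -
      have a: "\<And>n. mu * (x i - y n) / 2 = mu * x i / 2 - mu * y n / 2" by (simp add: field_simps)
      show ?thesis unfolding phix'_def S2_def a sum_distrib_left ..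
    qed
    have r: "hbar * (mu * g * real l / (2 * hbar) + g / hbar * (mu / 2 * S2)) = mu * g / 2 * (real l + S2)"
      using hb by (simp add: field_simps)
    have "zE mu g N (\<lambda>m. 1 * x m) i + (- \<i> * complex_of_real hbar * complex_of_real 1) * complex_of_real (phix' hbar mu g l y (N - l) i (x i))
        = \<i> * complex_of_real (- (mu * g / 2 * S1) + hbar * (mu * g * real l / (2 * hbar) + g / hbar * (mu / 2 * S2)))"
      unfolding z p by (simp add: algebra_simps)
    also have "\<dots> = \<i> * complex_of_real (mu * g / 2 * (- S1 + real l + S2))"
      unfolding r by (simp add: algebra_simps)
    also have "\<dots> = (\<i> * complex_of_real mu * complex_of_real g / 2) * complex_of_real (- S1 + real l + S2)"
      by (simp add: algebra_simps)
    finally show ?thesis using True unfolding Rgen_def S1_def[symmetric] S2_def[symmetric] by simp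
  qed
qed

lemma entry_y:
  assumes hb: "hbar \<noteq> 0"
  shows "(\<lambda>i j. if i = j then zE mu g (N - l) (\<lambda>m. - 1 * y m) i + (- \<i> * complex_of_real hbar * complex_of_real (- 1)) * complex_of_real (phiy' hbar mu g l x N i (y i))
      else Lnr_offdiag mu g (\<lambda>m. - 1 * y m) i j)
    = (\<lambda>i j. (\<i> * complex_of_real mu * complex_of_real g / 2) * complex_of_real (Rgen (N - l) N (real l) (\<lambda>i. - (mu * y i / 2)) (\<lambda>r. - (mu * x r / 2)) i j))"
proof (intro ext)
  fix i j :: nat
  show "(if i = j then zE mu g (N - l) (\<lambda>m. - 1 * y m) i + (- \<i> * complex_of_real hbar * complex_of_real (- 1)) * complex_of_real (phiy' hbar mu g l x N i (y i))
      else Lnr_offdiag mu g (\<lambda>m. - 1 * y m) i j)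
    = (\<i> * complex_of_real mu * complex_of_real g / 2) * complex_of_real (Rgen (N - l) N (real l) (\<lambda>i. - (mu * y i / 2)) (\<lambda>r. - (mu * x r / 2)) i j)"
  proof (cases "i = j")
    case False
    have arg: "mu * (- 1 * y i - - 1 * y j) / 2 = - (mu * y i / 2) - - (mu * y j / 2)" by (simp add: field_simps)
    show ?thesis using False unfolding Lnr_offdiag_def Rgen_def arg by simp
  next
    case True
    define S1 where "S1 = (\<Sum>k\<in>{1..N - l} - {i}. cosh (- (mu * y i / 2) - - (mu * y k / 2)) / sinh (- (mu * y i / 2) - - (mu * y k / 2)))"
    define S2 where "S2 = (\<Sum>r\<in>{1..N}. sinh (- (mu * y i / 2) - - (mu * x r / 2)) / cosh (- (mu * y i / 2) - - (mu * x r / 2)))"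
    have z: "zE mu g (N - l) (\<lambda>m. - 1 * y m) i = - (\<i> * complex_of_real mu * complex_of_real g / 2) * complex_of_real S1"
    proof -
      have a: "\<And>k. mu * (- 1 * y i - - 1 * y k) / 2 = - (mu * y i / 2) - - (mu * y k / 2)" by (simp add: field_simps)
      show ?thesis unfolding zE_def S1_def a of_real_sum ..
    qed
    have p: "phiy' hbar mu g l x N i (y i) = mu * g * real l / (2 * hbar) + g / hbar * (mu / 2 * S2)"
    proof -
      have a: "\<And>m. mu * (x m - y i) / 2 = - (mu * y i / 2) - - (mu * x m / 2)" by (simp add: field_simps)
      show ?thesis unfolding phiy'_def S2_def a sum_distrib_left ..
    qed
    have r: "hbar * (mu * g * real l / (2 * hbar) + g / hbar * (mu / 2 * S2)) = mu * g / 2 * (real l + S2)"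
      using hb by (simp add: field_simps)
    have "zE mu g (N - l) (\<lambda>m. - 1 * y m) i + (- \<i> * complex_of_real hbar * complex_of_real (- 1)) * complex_of_real (phiy' hbar mu g l x N i (y i))
        = \<i> * complex_of_real (- (mu * g / 2 * S1) + hbar * (mu * g * real l / (2 * hbar) + g / hbar * (mu / 2 * S2)))"
      unfolding z p by (simp add: algebra_simps)
    also have "\<dots> = \<i> * complex_of_real (mu * g / 2 * (- S1 + real l + S2))"
      unfolding r by (simp add: algebra_simps)
    also have "\<dots> = (\<i> * complex_of_real mu * complex_of_real g / 2) * complex_of_real (- S1 + real l + S2)"
      by (simp add: algebra_simps)
    finally show ?thesis using True unfolding Rgen_def S1_def[symmetric] S2_def[symmetric] by simp
  qed
qed


lemma exp_neg2: "exp (2 * (- t)) = 1 / exp (2 * (t::real))"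
proof -
  have "exp (2 * (- t)) = exp (- (2 * t))" by simp
  also have "\<dots> = inverse (exp (2 * t))" by (rule exp_minus)
  finally show ?thesis by (simp add: inverse_eq_divide)
qed

lemma inj_exp_scaled:
  assumes "inj_on x A" "mu \<noteq> (0::real)"
  shows "inj_on (\<lambda>k. exp (2 * (mu * x k / 2))) A"
proof (rule inj_onI)
  fix a b assume ab: "a \<in> A" "b \<in> A" "exp (2 * (mu * x a / 2)) = exp (2 * (mu * x b / 2))"
  then have "mu * x a = mu * x b" by simp
  then have "x a = x b" using assms(2) by simp
  then show "a = b" using assms(1) ab(1,2) unfolding inj_on_def by blast
qed

theorem theorem4p1:
  fixes hbar mu g :: real and N l k :: nat and x y :: "nat \<Rightarrow> real"
  assumes "hbar > 0" "mu > 0" "g > 0"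
    and "l \<le> N" "1 \<le> k" "k \<le> N"
    and "inj_on x {1..N}" "inj_on y {1..N-l}"
  shows "Sigma_op hbar mu g N k 1 (\<lambda>x'. kernelK hbar mu g N l x' y) x =
         (\<Sum>j=0..min k l. coef_c mu g l j *
            Sigma_op hbar mu g (N - l) (k - j) (-1) (\<lambda>y'. kernelK hbar mu g N l x y') y)"
proof -
  have hb: "hbar \<noteq> 0" and mu0: "mu \<noteq> 0" using assms(1,2) by auto
  define a where "a = \<i> * complex_of_real mu * complex_of_real g / 2"
  define K where "K = kernelK hbar mu g N l x y"
  define X where "X = (\<lambda>k. exp (2 * (mu * x k / 2)))"
  define Y where "Y = (\<lambda>r. exp (2 * (mu * y r / 2)))"
  define ex where "ex = esym N k (Agen1 N (N - l) (real l) X Y)"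
  define ey where "ey j = esym (N - l) (k - j) (Agen1 (N - l) N (real l) (\<lambda>n. 1 / Y n) (\<lambda>m. 1 / X m))" for j
  have LHS: "Sigma_op hbar mu g N k 1 (\<lambda>x'. kernelK hbar mu g N l x' y) x = K * (a ^ k * complex_of_real ex)"
  proof -
    have "Sigma_op hbar mu g N k 1 (\<lambda>x'. kernelK hbar mu g N l x' y) x
        = K * esym N k (\<lambda>i j. if i = j then zE mu g N (\<lambda>m. 1 * x m) i + (- \<i> * complex_of_real hbar * complex_of_real 1) * complex_of_real (phix' hbar mu g l y (N - l) i (x i))
      else Lnr_offdiag mu g (\<lambda>m. 1 * x m) i j)"
      unfolding K_def by (rule sigma_esym) (rule mpartial_kernel_x)
    also have "\<dots> = K * (a ^ k * complex_of_real (esym N k (Rgen N (N - l) (real l) (\<lambda>i. mu * x i / 2) (\<lambda>r. mu * y r / 2))))"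
      unfolding entry_x[OF hb] a_def esym_scale_ofreal ..
    also have "Rgen N (N - l) (real l) (\<lambda>i. mu * x i / 2) (\<lambda>r. mu * y r / 2) = (\<lambda>i j. exp (mu * x i / 2) * Agen1 N (N - l) (real l) X Y i j / exp (mu * x j / 2))"
      unfolding X_def Y_def by (intro ext) (rule Rgen_conj)
    also have "esym N k \<dots> = ex" unfolding ex_def by (rule esym_conj) simp
    finally show ?thesis .
  qed
  have RHS: "Sigma_op hbar mu g (N - l) (k - j) (-1) (\<lambda>y'. kernelK hbar mu g N l x y') y = K * (a ^ (k - j) * complex_of_real (ey j))" for j
  proof -
    have "Sigma_op hbar mu g (N - l) (k - j) (-1) (\<lambda>y'. kernelK hbar mu g N l x y') y
        = K * esym (N - l) (k - j) (\<lambda>i j. if i = j then zE mu g (N - l) (\<lambda>m. - 1 * y m) i + (- \<i> * complex_of_real hbar * complex_of_real (- 1)) * complex_of_real (phiy' hbar mu g l x N i (y i))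
      else Lnr_offdiag mu g (\<lambda>m. - 1 * y m) i j)"
      unfolding K_def by (rule sigma_esym) (rule mpartial_kernel_y)
    also have "\<dots> = K * (a ^ (k - j) * complex_of_real (esym (N - l) (k - j) (Rgen (N - l) N (real l) (\<lambda>i. - (mu * y i / 2)) (\<lambda>r. - (mu * x r / 2)))))"
      unfolding entry_y[OF hb] a_def esym_scale_ofreal ..
    also have "Rgen (N - l) N (real l) (\<lambda>i. - (mu * y i / 2)) (\<lambda>r. - (mu * x r / 2))
        = (\<lambda>i j. exp (- (mu * y i / 2)) * Agen1 (N - l) N (real l) (\<lambda>n. 1 / Y n) (\<lambda>m. 1 / X m) i j / exp (- (mu * y j / 2)))"
      unfolding X_def Y_def exp_neg2[symmetric] by (intro ext) (rule Rgen_conj)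
    also have "esym (N - l) (k - j) \<dots> = ey j" unfolding ey_def by (rule esym_conj) simp
    finally show ?thesis .
  qed
  have core: "ex = (\<Sum>j=0..min k l. real (Sn l j) * ey j)"
  proof -
    have Xpos: "\<And>i. i \<in> {1..N} \<Longrightarrow> X i > 0" unfolding X_def by simp
    have Ypos: "\<And>i. i \<in> {1..N - l} \<Longrightarrow> Y i > 0" unfolding Y_def by simp
    have Xinj: "inj_on X {1..N}" unfolding X_def by (rule inj_exp_scaled[OF assms(7) mu0])
    have Yinj: "inj_on Y {1..N - l}" unfolding Y_def by (rule inj_exp_scaled[OF assms(8) mu0])
    have NM: "N - (N - l) = l" using assms(4) by simp
    show ?thesis
      using core_esym[OF Xpos Xinj Ypos Yinj, of k] unfolding NM ex_def ey_def by simp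
  qed
  have coef: "coef_c mu g l j = a ^ j * complex_of_real (real (Sn l j))" for j
    unfolding coef_c_def Sn_def a_def by simp
  have "K * (a ^ k * complex_of_real ex) = (\<Sum>j=0..min k l. K * (a ^ k * complex_of_real (real (Sn l j) * ey j)))"
    unfolding core of_real_sum sum_distrib_left ..
  also have "\<dots> = (\<Sum>j=0..min k l. coef_c mu g l j * (K * (a ^ (k - j) * complex_of_real (ey j))))"
  proof (intro sum.cong refl)
    fix j assume "j \<in> {0..min k l}"
    then have "j \<le> k" by simp
    then have "a ^ k = a ^ j * a ^ (k - j)" by (simp add: power_add[symmetric])
    then show "K * (a ^ k * complex_of_real (real (Sn l j) * ey j)) = coef_c mu g l j * (K * (a ^ (k - j) * complex_of_real (ey j)))"
      unfolding coef by (simp add: mult_ac)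
  qed
  finally show ?thesis unfolding LHS RHS .
qed

end
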